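(* Let $T$ be a completely non-unitary contraction on a separable infinite-dimensional complex Hilbert space $\mathcal{H}$ which is not an isometry, and suppose $\mathcal{D}_T\subseteq\mathcal{D}_{T^*}$ and $\dim\mathcal{D}_{T^*}<\infty$. Then $T$ is analytic if and only if $T$ has no non-zero eigenvalue.
   Context: For a contraction $T$ on $\mathcal{H}$, $\mathcal{D}_T=\overline{(I-T^*T)^{1/2}\mathcal{H}}$ and $\mathcal{D}_{T^*}=\overline{(I-TT^* )^{1/2}\mathcal{H}}$. A contraction is completely non-unitary if it has no nonzero reducing subspace on which it is unitary. $T$ is analytic if $\bigcap_{m\ge1}T^m\mathcal{H}=\{0\}$. *)

theory Defs
  imports "HOL-Analysis.Analysis"
begin

text \<open>Complex Hilbert spaces: a Banach space (over the reals) with a compatible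
complex scalar multiplication and an inner product (conjugate-linear in the first
argument) inducing the norm.\<close>

class chilbert = banach +
  fixes scaleC :: "complex \<Rightarrow> 'a \<Rightarrow> 'a" (infixr \<open>*\<^sub>C\<close> 75)
    and cinner :: "'a \<Rightarrow> 'a \<Rightarrow> complex"
  assumes scaleC_add_right: "a *\<^sub>C (x + y) = a *\<^sub>C x + a *\<^sub>C y"
    and scaleC_add_left: "(a + b) *\<^sub>C x = a *\<^sub>C x + b *\<^sub>C x"
    and scaleC_scaleC: "a *\<^sub>C (b *\<^sub>C x) = (a * b) *\<^sub>C x"
    and scaleC_one: "1 *\<^sub>C x = x"
    and scaleR_scaleC: "scaleR r x = complex_of_real r *\<^sub>C x"
    and cinner_conj: "cinner x y = cnj (cinner y x)"
    and cinner_add_left: "cinner (x + y) z = cinner x z + cinner y z"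
    and cinner_scaleC_left: "cinner (a *\<^sub>C x) y = cnj a * cinner x y"
    and cinner_self_norm: "cinner x x = complex_of_real ((norm x)\<^sup>2)"

definition separable_space :: "'a::topological_space itself \<Rightarrow> bool" where
  "separable_space _ \<longleftrightarrow> (\<exists>D::'a set. countable D \<and> closure D = UNIV)"

definition cspan :: "'a::chilbert set \<Rightarrow> 'a set" where
  "cspan B = {\<Sum>b\<in>F. c b *\<^sub>C b | F c. finite F \<and> F \<subseteq> B}"

definition finite_dim_set :: "'a::chilbert set \<Rightarrow> bool" where
  "finite_dim_set M \<longleftrightarrow> (\<exists>B. finite B \<and> cspan B = M)"

definition csubspace :: "'a::chilbert set \<Rightarrow> bool" where
  "csubspace M \<longleftrightarrow> 0 \<in> M \<and> (\<forall>x\<in>M. \<forall>y\<in>M. x + y \<in> M) \<and> (\<forall>c. \<forall>x\<in>M. c *\<^sub>C x \<in> M)"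

definition cblinear :: "('a::chilbert \<Rightarrow> 'a) \<Rightarrow> bool" where
  "cblinear T \<longleftrightarrow> bounded_linear T \<and> (\<forall>c x. T (c *\<^sub>C x) = c *\<^sub>C T x)"

definition contraction_op :: "('a::chilbert \<Rightarrow> 'a) \<Rightarrow> bool" where
  "contraction_op T \<longleftrightarrow> cblinear T \<and> (\<forall>x. norm (T x) \<le> norm x)"

definition isometry_op :: "('a::chilbert \<Rightarrow> 'a) \<Rightarrow> bool" where
  "isometry_op T \<longleftrightarrow> (\<forall>x. norm (T x) = norm x)"

definition adj :: "('a::chilbert \<Rightarrow> 'a) \<Rightarrow> 'a \<Rightarrow> 'a" where
  "adj T = (SOME S. \<forall>x y. cinner (T x) y = cinner x (S y))"

definition positive_op :: "('a::chilbert \<Rightarrow> 'a) \<Rightarrow> bool" where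
  "positive_op A \<longleftrightarrow> cblinear A \<and> (\<forall>x. Im (cinner (A x) x) = 0 \<and> Re (cinner (A x) x) \<ge> 0)"

definition op_sqrt :: "('a::chilbert \<Rightarrow> 'a) \<Rightarrow> 'a \<Rightarrow> 'a" where
  "op_sqrt A = (THE S. positive_op S \<and> S \<circ> S = A)"

definition defect_space :: "('a::chilbert \<Rightarrow> 'a) \<Rightarrow> 'a set" where
  "defect_space T = closure (range (op_sqrt (\<lambda>x. x - adj T (T x))))"

definition reducing_subspace :: "('a::chilbert \<Rightarrow> 'a) \<Rightarrow> 'a set \<Rightarrow> bool" where
  "reducing_subspace T M \<longleftrightarrow> csubspace M \<and> closed M \<and> T ` M \<subseteq> M \<and> adj T ` M \<subseteq> M"

definition unitary_on :: "('a::chilbert \<Rightarrow> 'a) \<Rightarrow> 'a set \<Rightarrow> bool" where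
  "unitary_on T M \<longleftrightarrow> (\<forall>x\<in>M. norm (T x) = norm x) \<and> T ` M = M"

definition completely_non_unitary :: "('a::chilbert \<Rightarrow> 'a) \<Rightarrow> bool" where
  "completely_non_unitary T \<longleftrightarrow>
     \<not> (\<exists>M. reducing_subspace T M \<and> M \<noteq> {0} \<and> unitary_on T M)"

definition analytic_op :: "('a::chilbert \<Rightarrow> 'a) \<Rightarrow> bool" where
  "analytic_op T \<longleftrightarrow> (\<Inter>m\<in>{1..}. range (T ^^ m)) = {0}"

definition eigenvalue :: "('a::chilbert \<Rightarrow> 'a) \<Rightarrow> complex \<Rightarrow> bool" where
  "eigenvalue T z \<longleftrightarrow> (\<exists>x. x \<noteq> 0 \<and> T x = z *\<^sub>C x)"

end

theory Submission
  imports Defs "HOL-Computational_Algebra.Formal_Power_Series"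
    "HOL-Computational_Algebra.Fundamental_Theorem_Algebra"
begin


lemma scaleC_0_left[simp]: "0 *\<^sub>C (x::'a::chilbert) = 0"
  using scaleR_scaleC[of 0 x] by simp
lemma scaleC_0_right[simp]: "a *\<^sub>C 0 = 0"
  using scaleC_add_right[of a 0 0] by simp
lemma scaleC_minus_right: "a *\<^sub>C (- x) = - (a *\<^sub>C x)"
proof -
  have "a *\<^sub>C x + a *\<^sub>C (-x) = 0" using scaleC_add_right[of a x "-x"] by simp
  then have "- (a *\<^sub>C x) = a *\<^sub>C (-x)" by (rule add.inverse_unique)
  then show ?thesis by simp
qed
lemma scaleC_diff_right: "a *\<^sub>C (x - y) = a *\<^sub>C x - a *\<^sub>C y"
  using scaleC_add_right[of a x "-y"] scaleC_minus_right[of a y] by simp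
lemma scaleC_minus_left: "(- a) *\<^sub>C x = - (a *\<^sub>C x)"
proof -
  have "a *\<^sub>C x + (-a) *\<^sub>C x = 0" using scaleC_add_left[of a "-a" x] by simp
  then have "- (a *\<^sub>C x) = (-a) *\<^sub>C x" by (rule add.inverse_unique)
  then show ?thesis by simp
qed
lemma scaleC_diff_left: "(a - b) *\<^sub>C x = a *\<^sub>C x - b *\<^sub>C x"
  using scaleC_add_left[of a "-b" x] scaleC_minus_left[of b x] by simp
lemma scaleC_of_real: "complex_of_real r *\<^sub>C x = r *\<^sub>R x"
  by (simp add: scaleR_scaleC)
lemma scaleC_sum_right: "a *\<^sub>C (\<Sum>i\<in>F. f i) = (\<Sum>i\<in>F. a *\<^sub>C f i)"
  by (induction F rule: infinite_finite_induct) (auto simp: scaleC_add_right)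

lemma cinner_add_right: "cinner x (y + z) = cinner x y + cinner x z"
proof -
  have "cinner x (y+z) = cnj (cinner (y+z) x)" by (rule cinner_conj)
  also have "\<dots> = cnj (cinner y x) + cnj (cinner z x)" by (simp add: cinner_add_left)
  also have "\<dots> = cinner x y + cinner x z" by (simp add: cinner_conj[of x y] cinner_conj[of x z])
  finally show ?thesis .
qed
lemma cinner_scaleC_right: "cinner x (a *\<^sub>C y) = a * cinner x y"
proof -
  have "cinner x (a *\<^sub>C y) = cnj (cinner (a *\<^sub>C y) x)" by (rule cinner_conj)
  also have "\<dots> = a * cnj (cinner y x)" by (simp add: cinner_scaleC_left)
  also have "\<dots> = a * cinner x y" by (simp add: cinner_conj[of x y])
  finally show ?thesis .
qed
lemma cinner_zero_left[simp]: "cinner 0 x = 0"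
  using cinner_add_left[of 0 0 x] by simp
lemma cinner_zero_right[simp]: "cinner x 0 = 0"
  using cinner_add_right[of x 0 0] by simp
lemma cinner_minus_left: "cinner (- x) y = - cinner x y"
proof -
  have "cinner x y + cinner (-x) y = 0" using cinner_add_left[of x "-x" y] by simp
  then have "- cinner x y = cinner (-x) y" by (rule add.inverse_unique)
  then show ?thesis by simp
qed
lemma cinner_minus_right: "cinner x (- y) = - cinner x y"
proof -
  have "cinner x y + cinner x (-y) = 0" using cinner_add_right[of x y "-y"] by simp
  then have "- cinner x y = cinner x (-y)" by (rule add.inverse_unique)
  then show ?thesis by simp
qed
lemma cinner_diff_left: "cinner (x - y) z = cinner x z - cinner y z"
  using cinner_add_left[of x "-y" z] cinner_minus_left[of y z] by simp
lemma cinner_diff_right: "cinner x (y - z) = cinner x y - cinner x z"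
  using cinner_add_right[of x y "-z"] cinner_minus_right[of x z] by simp
lemma cinner_scaleR_left: "cinner (r *\<^sub>R x) y = r *\<^sub>R cinner x y"
  by (simp add: scaleR_scaleC cinner_scaleC_left scaleR_conv_of_real)
lemma cinner_scaleR_right: "cinner x (r *\<^sub>R y) = r *\<^sub>R cinner x y"
  by (simp add: scaleR_scaleC cinner_scaleC_right scaleR_conv_of_real)
lemma cinner_sum_right: "cinner x (\<Sum>i\<in>F. f i) = (\<Sum>i\<in>F. cinner x (f i))"
  by (induction F rule: infinite_finite_induct) (auto simp: cinner_add_right)
lemma cinner_sum_left: "cinner (\<Sum>i\<in>F. f i) x = (\<Sum>i\<in>F. cinner (f i) x)"
  by (induction F rule: infinite_finite_induct) (auto simp: cinner_add_left)

lemma norm_sq_cinner: "(norm x)\<^sup>2 = Re (cinner x x)"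
  by (simp add: cinner_self_norm)
lemma cinner_self_Im: "Im (cinner x x) = 0"
  by (simp add: cinner_self_norm)
lemma cinner_self_eq_0[simp]: "cinner x x = 0 \<longleftrightarrow> x = 0"
  by (simp add: cinner_self_norm)
lemma cinner_self_real: "cinner x x = complex_of_real (Re (cinner x x))"
  by (simp add: cinner_self_norm)

lemma norm_add_sq: "(norm (x + y))\<^sup>2 = (norm x)\<^sup>2 + (norm y)\<^sup>2 + 2 * Re (cinner x y)"
proof -
  have "cinner y x = cnj (cinner x y)" by (rule cinner_conj)
  then show ?thesis
    by (simp add: norm_sq_cinner cinner_add_left cinner_add_right)
qed
lemma norm_diff_sq: "(norm (x - y))\<^sup>2 = (norm x)\<^sup>2 + (norm y)\<^sup>2 - 2 * Re (cinner x y)"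
  using norm_add_sq[of x "-y"] by (simp add: cinner_minus_right)

lemma norm_scaleC: "norm (a *\<^sub>C x) = cmod a * norm x"
proof -
  have "cinner (a *\<^sub>C x) (a *\<^sub>C x) = (a * cnj a) * cinner x x"
    by (simp add: cinner_scaleC_left cinner_scaleC_right mult.commute mult.left_commute)
  also have "\<dots> = complex_of_real ((cmod a * norm x)\<^sup>2)"
    by (simp add: cinner_self_norm complex_norm_square[symmetric] power_mult_distrib)
  finally have "complex_of_real ((norm (a *\<^sub>C x))\<^sup>2) = complex_of_real ((cmod a * norm x)\<^sup>2)"
    by (simp only: cinner_self_norm)
  then have "(norm (a *\<^sub>C x))\<^sup>2 = (cmod a * norm x)\<^sup>2"
    by (simp only: of_real_eq_iff)
  then show ?thesis by (simp add: power2_eq_iff_nonneg)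
qed

lemma cs_unit_Re: "Re (cinner x y) \<le> norm x * norm y"
proof (cases "x = 0 \<or> y = 0")
  case True then show ?thesis by auto
next
  case False
  define u where "u = (1 / norm x) *\<^sub>R x"
  define v where "v = (1 / norm y) *\<^sub>R y"
  have nu: "norm u = 1" "norm v = 1" using False by (auto simp: u_def v_def)
  have "0 \<le> (norm (u - v))\<^sup>2" by simp
  then have "Re (cinner u v) \<le> 1" using nu by (simp add: norm_diff_sq)
  moreover have "Re (cinner u v) = Re (cinner x y) / (norm x * norm y)"
    by (simp add: u_def v_def cinner_scaleR_left cinner_scaleR_right)
  ultimately show ?thesis using False
    by (simp add: divide_le_eq mult_pos_pos)
qed

lemma cauchy_schwarz: "cmod (cinner x y) \<le> norm x * norm y"
proof (cases "cinner x y = 0")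
  case True then show ?thesis by simp
next
  case False
  define c where "c = cnj (cinner x y) / complex_of_real (cmod (cinner x y))"
  have cm: "cmod c = 1" using False by (simp add: c_def norm_divide)
  have "cinner x (c *\<^sub>C y) = (cinner x y * cnj (cinner x y)) / complex_of_real (cmod (cinner x y))"
    by (simp add: cinner_scaleC_right c_def mult.commute)
  also have "\<dots> = complex_of_real (cmod (cinner x y))"
    using False by (simp add: complex_norm_square[symmetric] power2_eq_square)
  finally have "cinner x (c *\<^sub>C y) = complex_of_real (cmod (cinner x y))" .
  then have "cmod (cinner x y) = Re (cinner x (c *\<^sub>C y))" by simp
  also have "\<dots> \<le> norm x * norm (c *\<^sub>C y)" by (rule cs_unit_Re)
  also have "\<dots> = norm x * norm y" by (simp add: norm_scaleC cm)
  finally show ?thesis .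
qed

lemma bounded_linear_cinner_right: "bounded_linear (\<lambda>y. cinner x y)"
proof
  show "cinner x (b1 + b2) = cinner x b1 + cinner x b2" for b1 b2 by (rule cinner_add_right)
  show "cinner x (r *\<^sub>R b) = r *\<^sub>R cinner x b" for r b by (rule cinner_scaleR_right)
  show "\<exists>K. \<forall>y. norm (cinner x y) \<le> norm y * K"
    by (rule exI[of _ "norm x"]) (metis cauchy_schwarz mult.commute)
qed
lemma bounded_linear_cinner_left: "bounded_linear (\<lambda>x. cinner x y)"
proof
  show "cinner (b1 + b2) y = cinner b1 y + cinner b2 y" for b1 b2 by (rule cinner_add_left)
  show "cinner (r *\<^sub>R b) y = r *\<^sub>R cinner b y" for r b by (rule cinner_scaleR_left)
  show "\<exists>K. \<forall>x. norm (cinner x y) \<le> norm x * K"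
    by (rule exI[of _ "norm y"]) (simp add: cauchy_schwarz)
qed

lemma cinner_ext_right: "(\<And>x. cinner x y = cinner x z) \<Longrightarrow> y = z"
  by (metis cinner_diff_right cinner_self_eq_0 right_minus_eq)
lemma cinner_ext_left: "(\<And>x. cinner y x = cinner z x) \<Longrightarrow> y = z"
  by (metis cinner_diff_left cinner_self_eq_0 right_minus_eq)

lemma bounded_linear_scaleC: "bounded_linear (\<lambda>x::'a::chilbert. a *\<^sub>C x)"
proof
  show "a *\<^sub>C (b1 + b2) = a *\<^sub>C b1 + a *\<^sub>C b2" for b1 b2 :: 'a by (rule scaleC_add_right)
  show "a *\<^sub>C (r *\<^sub>R b) = r *\<^sub>R (a *\<^sub>C b)" for r and b :: 'a
    by (simp add: scaleR_scaleC scaleC_scaleC mult.commute)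
  show "\<exists>K. \<forall>x::'a. norm (a *\<^sub>C x) \<le> norm x * K"
    by (rule exI[of _ "cmod a"]) (simp add: norm_scaleC mult.commute)
qed


lemma csubspace_add: "csubspace K \<Longrightarrow> x \<in> K \<Longrightarrow> y \<in> K \<Longrightarrow> x + y \<in> K"
  by (simp add: csubspace_def)
lemma csubspace_scaleC: "csubspace K \<Longrightarrow> x \<in> K \<Longrightarrow> c *\<^sub>C x \<in> K"
  by (simp add: csubspace_def)
lemma csubspace_0: "csubspace K \<Longrightarrow> 0 \<in> K"
  by (simp add: csubspace_def)
lemma csubspace_scaleR: "csubspace K \<Longrightarrow> x \<in> K \<Longrightarrow> r *\<^sub>R x \<in> K"
  by (simp add: csubspace_def scaleR_scaleC)
lemma csubspace_minus: "csubspace K \<Longrightarrow> x \<in> K \<Longrightarrow> - x \<in> K"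
  using csubspace_scaleR[of K x "-1"] by simp
lemma csubspace_diff: "csubspace K \<Longrightarrow> x \<in> K \<Longrightarrow> y \<in> K \<Longrightarrow> x - y \<in> K"
  using csubspace_add[of K x "-y"] csubspace_minus[of K y] by simp

lemma parallelogram: "(norm ((a::'a::chilbert) - b))\<^sup>2 = 2 * (norm a)\<^sup>2 + 2 * (norm b)\<^sup>2 - (norm (a + b))\<^sup>2"
  using norm_add_sq[of a b] norm_diff_sq[of a b] by simp

lemma projection_exists:
  fixes K :: "'a::chilbert set"
  assumes K: "csubspace K" "closed K"
  shows "\<exists>k\<in>K. \<forall>v\<in>K. cinner v (x - k) = 0"
proof -
  define D where "D = (\<lambda>k. (norm (x - k))\<^sup>2) ` K"
  define d where "d = Inf D"
  have Dne: "D \<noteq> {}" using csubspace_0[OF K(1)] by (auto simp: D_def)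
  have Dbdd: "bdd_below D" by (auto simp: D_def intro!: bdd_belowI[of _ 0])
  have low: "d \<le> (norm (x - k))\<^sup>2" if "k \<in> K" for k
    unfolding d_def using that Dbdd by (auto simp: D_def intro!: cInf_lower)
  have "\<exists>k\<in>K. (norm (x - k))\<^sup>2 < d + 1 / (real n + 1)" for n
  proof -
    have "Inf D < d + 1 / (real n + 1)" by (simp add: d_def)
    then show ?thesis using cInf_less_iff[OF Dne Dbdd] by (auto simp: D_def)
  qed
  then obtain k where kK: "\<And>n. k n \<in> K" and kd: "\<And>n. (norm (x - k n))\<^sup>2 < d + 1 / (real n + 1)"
    by metis
  have par: "(norm (k n - k m))\<^sup>2 \<le> 2 / (real m + 1) + 2 / (real n + 1)" for m n
  proof -
    define mid where "mid = (1/2::real) *\<^sub>R (k m + k n)"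
    have midK: "mid \<in> K" unfolding mid_def
      by (intro csubspace_scaleR[OF K(1)] csubspace_add[OF K(1)] kK)
    have e: "(x - k m) + (x - k n) = 2 *\<^sub>R (x - mid)" by (simp add: mid_def algebra_simps scaleR_2)
    have "(norm ((x - k m) + (x - k n)))\<^sup>2 = 4 * (norm (x - mid))\<^sup>2"
      by (simp add: e power_mult_distrib)
    also have "\<dots> \<ge> 4 * d" using low[OF midK] by simp
    finally have a: "(norm ((x - k m) + (x - k n)))\<^sup>2 \<ge> 4 * d" .
    have "(norm (k n - k m))\<^sup>2 = (norm ((x - k m) - (x - k n)))\<^sup>2" by (simp add: algebra_simps)
    also have "\<dots> = 2 * (norm (x - k m))\<^sup>2 + 2 * (norm (x - k n))\<^sup>2 - (norm ((x - k m) + (x - k n)))\<^sup>2"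
      by (rule parallelogram)
    also have "\<dots> \<le> 2 / (real m + 1) + 2 / (real n + 1)"
      using kd[of m] kd[of n] a by simp
    finally show ?thesis .
  qed
  have "Cauchy k"
  proof (rule CauchyI)
    fix e :: real assume e: "0 < e"
    obtain M :: nat where M: "4 / (e\<^sup>2) < real M" using reals_Archimedean2 by blast
    have "norm (k m - k n) < e" if "m \<ge> M" "n \<ge> M" for m n
    proof -
      have e2: "0 < e\<^sup>2" using e by simp
      have "4 / e\<^sup>2 < real M + 1" using M by simp
      then have Me: "4 / (real M + 1) < e\<^sup>2" using e2
        by (simp add: divide_less_eq mult.commute)
      have "2 / (real n + 1) \<le> 2 / (real M + 1)" "2 / (real m + 1) \<le> 2 / (real M + 1)"
        using that by (simp_all add: frac_le)
      moreover have "(norm (k m - k n))\<^sup>2 \<le> 2 / (real m + 1) + 2 / (real n + 1)"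
        using par[of n m] par[of m n] by (simp add: norm_minus_commute add.commute)
      moreover have "4 / (real M + 1) = 2 / (real M + 1) + 2 / (real M + 1)" by simp
      ultimately have "(norm (k m - k n))\<^sup>2 < e\<^sup>2" using Me by linarith
      then show ?thesis using e by (simp add: power_less_imp_less_base)
    qed
    then show "\<exists>M. \<forall>m\<ge>M. \<forall>n\<ge>M. norm (k m - k n) < e" by blast
  qed
  then obtain k0 where k0: "k \<longlonglongrightarrow> k0" using Cauchy_convergent_iff convergent_def by blast
  have k0K: "k0 \<in> K" using closed_sequentially[OF K(2)] kK k0 by blast
  have "(\<lambda>n. (norm (x - k n))\<^sup>2) \<longlonglongrightarrow> (norm (x - k0))\<^sup>2"
    by (intro tendsto_intros k0)
  moreover have "(\<lambda>n. 1 / (real n + 1)) \<longlonglongrightarrow> 0"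
    using LIMSEQ_inverse_real_of_nat by (simp add: inverse_eq_divide add.commute)
  then have "(\<lambda>n. d + 1 / (real n + 1)) \<longlonglongrightarrow> d + 0"
    by (intro tendsto_intros)
  ultimately have "(norm (x - k0))\<^sup>2 \<le> d + 0"
    by (rule LIMSEQ_le) (use kd less_imp_le in blast)
  then have best: "(norm (x - k0))\<^sup>2 \<le> (norm (x - k))\<^sup>2" if "k \<in> K" for k
    using low[OF that] by linarith
  define u where "u = x - k0"
  have re0: "Re (cinner u v) = 0" if vK: "v \<in> K" for v
  proof (cases "v = 0")
    case True then show ?thesis by simp
  next
    case False
    define r where "r = Re (cinner u v)"
    define t where "t = r / (norm v)\<^sup>2"
    have nv: "(norm v)\<^sup>2 > 0" using False by simp
    have "k0 + t *\<^sub>R v \<in> K" using k0K vK K(1) by (intro csubspace_add csubspace_scaleR)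
    from best[OF this] have "(norm u)\<^sup>2 \<le> (norm (u - t *\<^sub>R v))\<^sup>2"
      by (simp add: u_def algebra_simps)
    also have "\<dots> = (norm u)\<^sup>2 + t\<^sup>2 * (norm v)\<^sup>2 - 2 * t * r"
      by (simp add: norm_diff_sq cinner_scaleR_right r_def power_mult_distrib)
    finally have ineq: "2 * t * r \<le> t\<^sup>2 * (norm v)\<^sup>2" by simp
    define N where "N = (norm v)\<^sup>2"
    have N0: "N > 0" using nv by (simp add: N_def)
    have e1: "2 * t * r = 2 * (r\<^sup>2 / N)" by (simp add: t_def N_def power2_eq_square)
    have e2: "t\<^sup>2 * (norm v)\<^sup>2 = r\<^sup>2 / N" using N0 unfolding t_def N_def[symmetric] by (simp add: power2_eq_square)
    have "r\<^sup>2 / N \<le> 0" using ineq e1 e2 by linarith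
    then have "r\<^sup>2 \<le> 0" using N0 by (simp add: divide_le_0_iff)
    then show ?thesis by (simp add: r_def)
  qed
  have "cinner u v = 0" if vK: "v \<in> K" for v
  proof -
    have "Re (cinner u v) = 0" by (rule re0[OF vK])
    moreover have "Re (cinner u (\<i> *\<^sub>C v)) = 0" by (rule re0[OF csubspace_scaleC[OF K(1) vK]])
    then have "Im (cinner u v) = 0" by (simp add: cinner_scaleC_right)
    ultimately show ?thesis by (simp add: complex_eq_iff)
  qed
  then have "cinner v u = 0" if "v \<in> K" for v
    using that cinner_conj[of v u] by simp
  then show ?thesis using k0K by (auto simp: u_def)
qed

lemma riesz:
  fixes f :: "'a::chilbert \<Rightarrow> complex"
  assumes bl: "bounded_linear f" and hom: "\<And>c x. f (c *\<^sub>C x) = c * f x"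
  shows "\<exists>z. \<forall>x. f x = cinner z x"
proof (cases "\<forall>x. f x = 0")
  case True then show ?thesis by (intro exI[of _ 0]) simp
next
  case False
  then obtain x0 where fx0: "f x0 \<noteq> 0" by blast
  interpret f: bounded_linear f by (rule bl)
  define K where "K = {x. f x = 0}"
  have Ksub: "csubspace K" by (auto simp: K_def csubspace_def f.add hom)
  have Kcl: "closed K" unfolding K_def
    by (intro closed_Collect_eq continuous_intros f.continuous_on continuous_on_id)
  obtain k where kK: "k \<in> K" and ko: "\<And>v. v \<in> K \<Longrightarrow> cinner v (x0 - k) = 0"
    using projection_exists[OF Ksub Kcl, of x0] by blast
  define u where "u = x0 - k"
  have fu: "f u = f x0" using kK by (simp add: u_def K_def f.diff)
  then have u0: "u \<noteq> 0" using fx0 by auto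
  have cuu: "cinner u u \<noteq> 0" using u0 by simp
  define z where "z = cnj (f u / cinner u u) *\<^sub>C u"
  have "f x = cinner z x" for x
  proof -
    define w where "w = f u *\<^sub>C x - f x *\<^sub>C u"
    have "f w = 0" by (simp add: w_def f.diff hom mult.commute)
    then have "cinner w u = 0" using ko by (simp add: K_def u_def)
    then have "cinner u w = 0" using cinner_conj[of u w] by simp
    then have "f u * cinner u x = f x * cinner u u"
      by (simp add: w_def cinner_diff_right cinner_scaleC_right)
    then show ?thesis using cuu
      by (simp add: z_def cinner_scaleC_left field_simps)
  qed
  then show ?thesis by blast
qed

lemma cblinear_bounded_linear: "cblinear T \<Longrightarrow> bounded_linear T"
  by (simp add: cblinear_def)
lemma cblinear_scaleC: "cblinear T \<Longrightarrow> T (c *\<^sub>C x) = c *\<^sub>C T x"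
  by (simp add: cblinear_def)
lemma cblinear_add: "cblinear T \<Longrightarrow> T (x + y) = T x + T y"
  by (simp add: cblinear_def linear_simps)
lemma cblinear_diff: "cblinear T \<Longrightarrow> T (x - y) = T x - T y"
  by (simp add: cblinear_def linear_simps)
lemma cblinear_zero: "cblinear T \<Longrightarrow> T 0 = 0"
  by (simp add: cblinear_def linear_simps)
lemma cblinear_minus: "cblinear T \<Longrightarrow> T (- x) = - T x"
  by (simp add: cblinear_def linear_simps)
lemma cblinear_scaleR: "cblinear T \<Longrightarrow> T (r *\<^sub>R x) = r *\<^sub>R T x"
  by (simp add: cblinear_def linear_simps)
lemma cblinear_sum: "cblinear T \<Longrightarrow> T (\<Sum>i\<in>F. f i) = (\<Sum>i\<in>F. T (f i))"
  by (induction F rule: infinite_finite_induct) (auto simp: cblinear_add cblinear_zero)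

lemma cblinear_compose: "cblinear S \<Longrightarrow> cblinear T \<Longrightarrow> cblinear (\<lambda>x. S (T x))"
  unfolding cblinear_def using bounded_linear_compose[of S T] by (auto simp: o_def)
lemma cblinear_id: "cblinear (\<lambda>x. x)"
  by (simp add: cblinear_def bounded_linear_ident)
lemma cblinear_minus_op: "cblinear S \<Longrightarrow> cblinear T \<Longrightarrow> cblinear (\<lambda>x. S x - T x)"
  unfolding cblinear_def by (auto intro: bounded_linear_sub simp: scaleC_diff_right)
lemma cblinear_add_op: "cblinear S \<Longrightarrow> cblinear T \<Longrightarrow> cblinear (\<lambda>x. S x + T x)"
  unfolding cblinear_def by (auto intro: bounded_linear_add simp: scaleC_add_right)
lemma cblinear_funpow: "cblinear T \<Longrightarrow> cblinear (T ^^ n)"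
proof (induction n)
  case 0 then show ?case by (simp add: cblinear_id id_def)
next
  case (Suc n) then show ?case using cblinear_compose[of T "T^^n"] by (simp add: o_def)
qed

lemma cblinearI:
  assumes "\<And>x y. T (x + y) = T x + T y" "\<And>c x. T (c *\<^sub>C x) = c *\<^sub>C T x" "\<And>x. norm (T x) \<le> norm x * K"
  shows "cblinear T"
  unfolding cblinear_def
proof
  show "bounded_linear T"
    by (rule bounded_linear_intro[where K=K]) (use assms in \<open>auto simp: scaleR_scaleC\<close>)
qed (use assms in auto)

lemma adj_exists:
  assumes "cblinear T"
  shows "\<exists>S. \<forall>x y. cinner (T x) y = cinner x (S y)"
proof -
  have "\<exists>z. \<forall>x. cinner y (T x) = cinner z x" for y
  proof (rule riesz)
    show "bounded_linear (\<lambda>x. cinner y (T x))"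
      using bounded_linear_compose[OF bounded_linear_cinner_right cblinear_bounded_linear[OF assms]]
      by (simp add: o_def)
    show "cinner y (T (c *\<^sub>C x)) = c * cinner y (T x)" for c x
      by (simp add: cblinear_scaleC[OF assms] cinner_scaleC_right)
  qed
  then obtain S where S: "\<And>y x. cinner y (T x) = cinner (S y) x" by metis
  have "cinner (T x) y = cinner x (S y)" for x y
    using S[of y x] cinner_conj[of "T x" y] cinner_conj[of x "S y"] by simp
  then show ?thesis by blast
qed

lemma adj_prop: "cblinear T \<Longrightarrow> cinner (T x) y = cinner x (adj T y)"
  using someI_ex[OF adj_exists] unfolding adj_def by blast

lemma adj_prop': "cblinear T \<Longrightarrow> cinner (adj T y) x = cinner y (T x)"
  using adj_prop[of T x y] cinner_conj[of "T x" y] cinner_conj[of x "adj T y"] by simp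

lemma adj_unique:
  assumes "\<And>x y. cinner (T x) y = cinner x (S y)"
  shows "adj T = S"
proof -
  have "\<exists>S. \<forall>x y. cinner (T x) y = cinner x (S y)" using assms by blast
  then have "\<forall>x y. cinner (T x) y = cinner x (adj T y)" unfolding adj_def by (rule someI_ex)
  then have "adj T y = S y" for y using assms by (intro cinner_ext_right) simp
  then show ?thesis by auto
qed

lemma adj_cblinear:
  assumes T: "cblinear T"
  shows "cblinear (adj T)"
proof -
  obtain K where K: "\<And>x. norm (T x) \<le> norm x * K" "K > 0"
    using bounded_linear.pos_bounded[OF cblinear_bounded_linear[OF T]] by blast
  have nb: "norm (adj T y) \<le> norm y * K" for y
  proof -
    have "(norm (adj T y))\<^sup>2 = Re (cinner (T (adj T y)) y)"
      by (simp add: adj_prop[OF T] norm_sq_cinner)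
    also have "\<dots> \<le> cmod (cinner (T (adj T y)) y)" by (rule complex_Re_le_cmod)
    also have "\<dots> \<le> norm (T (adj T y)) * norm y" by (rule cauchy_schwarz)
    also have "\<dots> \<le> norm (adj T y) * K * norm y" using K(1) by (simp add: mult_right_mono)
    finally have "norm (adj T y) * norm (adj T y) \<le> norm (adj T y) * (norm y * K)"
      by (simp add: power2_eq_square mult_ac)
    then show ?thesis
      by (cases "norm (adj T y) = 0") (use K(2) in \<open>simp_all add: mult_le_cancel_left\<close>)
  qed
  show ?thesis
  proof (rule cblinearI[OF _ _ nb])
    show "adj T (x + y) = adj T x + adj T y" for x y
      by (rule cinner_ext_right) (simp add: adj_prop[OF T, symmetric] cinner_add_right)
    show "adj T (c *\<^sub>C x) = c *\<^sub>C adj T x" for c x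
      by (rule cinner_ext_right) (simp add: adj_prop[OF T, symmetric] cinner_scaleC_right)
  qed
qed

lemma adj_adj: "cblinear T \<Longrightarrow> adj (adj T) = T"
  by (rule adj_unique) (simp add: adj_prop')

lemma adj_contraction:
  assumes T: "cblinear T" and c: "\<And>x. norm (T x) \<le> norm x"
  shows "norm (adj T y) \<le> norm y"
proof -
  have "(norm (adj T y))\<^sup>2 = Re (cinner (T (adj T y)) y)"
    by (simp add: adj_prop[OF T] norm_sq_cinner)
  also have "\<dots> \<le> cmod (cinner (T (adj T y)) y)" by (rule complex_Re_le_cmod)
  also have "\<dots> \<le> norm (T (adj T y)) * norm y" by (rule cauchy_schwarz)
  also have "\<dots> \<le> norm (adj T y) * norm y" using c by (simp add: mult_right_mono)
  finally have "norm (adj T y) * norm (adj T y) \<le> norm (adj T y) * norm y"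
    by (simp add: power2_eq_square mult_ac)
  then show ?thesis
    by (cases "norm (adj T y) = 0") (simp_all add: mult_le_cancel_left)
qed


section \<open>Coefficients of sqrt(1 - t)\<close>

definition sqc :: "nat \<Rightarrow> real" where
  "sqc n = (-1) ^ n * ((1/2) gchoose n)"

lemma sqc_0[simp]: "sqc 0 = 1" by (simp add: sqc_def)

lemma sqc_Suc: "sqc (Suc n) = sqc n * ((real n - 1/2) / (real n + 1))"
proof -
  have "(1/2::real) * ((1/2) gchoose n) = real n * ((1/2) gchoose n) + real (Suc n) * ((1/2) gchoose Suc n)"
    by (rule gbinomial_mult_1)
  then have h: "((1/2::real) gchoose Suc n) = ((1/2) gchoose n) * ((1/2 - real n) / (real n + 1))"
    by (simp add: field_simps)
  have h2: "(1/2 - real n) / (real n + 1) = - ((real n - 1/2) / (real n + 1))"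
    by (simp add: field_simps)
  show ?thesis unfolding sqc_def h h2 by simp
qed

lemma sqc_nonpos: "n \<ge> 1 \<Longrightarrow> sqc n \<le> 0"
proof (induction n)
  case 0 then show ?case by simp
next
  case (Suc n)
  show ?case
  proof (cases "n = 0")
    case True then show ?thesis by (simp add: sqc_Suc)
  next
    case False
    then have "sqc n \<le> 0" using Suc by simp
    moreover have "(real n - 1/2) / (real n + 1) \<ge> 0" using False by simp
    ultimately show ?thesis unfolding sqc_Suc by (rule mult_nonpos_nonneg)
  qed
qed

lemma sqc_partial: "(\<Sum>k\<le>N. sqc k) = - 2 * (real N + 1) * sqc (Suc N)"
proof (induction N)
  case 0 then show ?case by (simp add: sqc_Suc)
next
  case (Suc N)
  have "(\<Sum>k\<le>Suc N. sqc k) = - 2 * (real N + 1) * sqc (Suc N) + sqc (Suc N)"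
    using Suc by simp
  also have "\<dots> = - 2 * (real (Suc N) + 1) * sqc (Suc (Suc N))"
    by (simp add: sqc_Suc[of "Suc N"] field_simps)
  finally show ?case .
qed

lemma sqc_partial_nonneg: "(\<Sum>k\<le>N. sqc k) \<ge> 0"
  using sqc_nonpos[of "Suc N"] by (simp add: sqc_partial mult_nonpos_nonpos)

lemma sqc_abs_partial: "(\<Sum>k\<le>N. \<bar>sqc k\<bar>) = 2 - (\<Sum>k\<le>N. sqc k)"
proof (induction N)
  case 0 then show ?case by simp
next
  case (Suc N) then show ?case using sqc_nonpos[of "Suc N"] by simp
qed

lemma sqc_abs_summable: "summable (\<lambda>n. \<bar>sqc n\<bar>)"
  by (rule bounded_imp_summable[where B=2]) (use sqc_abs_partial sqc_partial_nonneg in auto)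

lemma sqc_summable: "summable sqc"
  using sqc_abs_summable summable_rabs_cancel by blast

lemma sqc_suminf_nonneg: "suminf sqc \<ge> 0"
  by (rule LIMSEQ_le_const[OF summable_LIMSEQ'[OF sqc_summable]]) (use sqc_partial_nonneg in auto)

lemma sqc_cauchy: "(\<Sum>k\<le>n. sqc k * sqc (n - k)) = (if n = 0 then 1 else if n = 1 then -1 else 0)"
proof -
  have "(\<Sum>k\<le>n. sqc k * sqc (n - k)) = (\<Sum>k\<le>n. (-1)^n * (((1/2::real) gchoose k) * ((1/2) gchoose (n - k))))"
    by (intro sum.cong refl) (simp add: sqc_def power_add[symmetric])
  also have "\<dots> = (-1)^n * (\<Sum>k=0..n. ((1/2::real) gchoose k) * ((1/2) gchoose (n - k)))"
    by (simp add: sum_distrib_left atMost_atLeast0)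
  also have "\<dots> = (-1)^n * ((1::real) gchoose n)"
    by (subst gbinomial_Vandermonde) simp
  also have "\<dots> = (if n = 0 then 1 else if n = 1 then -1 else 0)"
  proof -
    have "((1::real) gchoose n) = real (1 choose n)" using binomial_gbinomial[of 1 n, where 'a=real] by simp
    then show ?thesis by (cases n) (auto simp: binomial_eq_0)
  qed
  finally show ?thesis .
qed

section \<open>General Cauchy product\<close>

lemma cauchy_gen:
  fixes g :: "nat \<Rightarrow> nat \<Rightarrow> 'a::real_normed_vector"
  assumes a0: "\<And>i. \<alpha> i \<ge> 0" and b0: "\<And>j. \<beta> j \<ge> 0"
    and a: "summable \<alpha>" and b: "summable \<beta>"
    and gb: "\<And>i j. norm (g i j) \<le> \<alpha> i * \<beta> j"
    and lim: "(\<lambda>n. \<Sum>i<n. \<Sum>j<n. g i j) \<longlonglongrightarrow> L"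
  shows "(\<lambda>k. \<Sum>i\<le>k. g i (k - i)) sums L"
proof -
  let ?S1 = "\<lambda>n::nat. {..<n} \<times> {..<n}"
  let ?S2 = "\<lambda>n::nat. {(i,j). i + j < n}"
  have S1_mono: "\<And>m n. m \<le> n \<Longrightarrow> ?S1 m \<subseteq> ?S1 n" by auto
  have S2_le_S1: "\<And>n. ?S2 n \<subseteq> ?S1 n" by auto
  have S1_le_S2: "\<And>n. ?S1 (n div 2) \<subseteq> ?S2 n" by auto
  have finite_S1: "\<And>n. finite (?S1 n)" by simp
  with S2_le_S1 have finite_S2: "\<And>n. finite (?S2 n)" by (rule finite_subset)
  let ?g = "\<lambda>(i,j). g i j"
  let ?f = "\<lambda>(i,j). \<alpha> i * \<beta> j"
  have f_nonneg: "\<And>x. 0 \<le> ?f x" using a0 b0 by (auto intro: mult_nonneg_nonneg)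
  then have norm_sum_f: "\<And>A. norm (sum ?f A) = sum ?f A"
    unfolding real_norm_def
    by (simp only: abs_of_nonneg sum_nonneg [rule_format])
  have 1: "(\<lambda>n. sum ?g (?S1 n)) \<longlonglongrightarrow> L"
    using lim by (simp add: sum.cartesian_product)
  have "(\<lambda>n. (\<Sum>k<n. \<alpha> k) * (\<Sum>k<n. \<beta> k)) \<longlonglongrightarrow> (\<Sum>k. \<alpha> k) * (\<Sum>k. \<beta> k)"
    using a b by (intro tendsto_mult summable_LIMSEQ)
  then have "(\<lambda>n. sum ?f (?S1 n)) \<longlonglongrightarrow> (\<Sum>k. \<alpha> k) * (\<Sum>k. \<beta> k)"
    by (simp only: sum_product sum.Sigma [rule_format] finite_lessThan)
  then have "convergent (\<lambda>n. sum ?f (?S1 n))"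
    by (rule convergentI)
  then have Cauchy: "Cauchy (\<lambda>n. sum ?f (?S1 n))"
    by (rule convergent_Cauchy)
  have "Zfun (\<lambda>n. sum ?f (?S1 n - ?S2 n)) sequentially"
  proof (rule ZfunI, simp only: eventually_sequentially norm_sum_f)
    fix r :: real
    assume r: "0 < r"
    from CauchyD [OF Cauchy r] obtain N
      where "\<forall>m\<ge>N. \<forall>n\<ge>N. norm (sum ?f (?S1 m) - sum ?f (?S1 n)) < r" ..
    then have "\<And>m n. N \<le> n \<Longrightarrow> n \<le> m \<Longrightarrow> norm (sum ?f (?S1 m - ?S1 n)) < r"
      by (simp only: sum_diff finite_S1 S1_mono)
    then have N: "\<And>m n. N \<le> n \<Longrightarrow> n \<le> m \<Longrightarrow> sum ?f (?S1 m - ?S1 n) < r"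
      by (simp only: norm_sum_f)
    show "\<exists>N. \<forall>n\<ge>N. sum ?f (?S1 n - ?S2 n) < r"
    proof (intro exI allI impI)
      fix n
      assume "2 * N \<le> n"
      then have n: "N \<le> n div 2" by simp
      have "sum ?f (?S1 n - ?S2 n) \<le> sum ?f (?S1 n - ?S1 (n div 2))"
        by (intro sum_mono2 finite_Diff finite_S1 f_nonneg Diff_mono subset_refl S1_le_S2)
      also have "\<dots> < r"
        using n div_le_dividend by (rule N)
      finally show "sum ?f (?S1 n - ?S2 n) < r" .
    qed
  qed
  then have "Zfun (\<lambda>n. sum ?g (?S1 n - ?S2 n)) sequentially"
    apply (rule Zfun_le [rule_format])
    apply (simp only: norm_sum_f)
    apply (rule order_trans [OF norm_sum sum_mono])
    apply (auto simp add: gb)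
    done
  then have 2: "(\<lambda>n. sum ?g (?S1 n) - sum ?g (?S2 n)) \<longlonglongrightarrow> 0"
    unfolding tendsto_Zfun_iff diff_0_right
    by (simp only: sum_diff finite_S1 S2_le_S1)
  with 1 have "(\<lambda>n. sum ?g (?S2 n)) \<longlonglongrightarrow> L"
    by (rule Lim_transform2)
  then show ?thesis
    by (simp only: sums_def sum.triangle_reindex)
qed


definition sym_op :: "('a::chilbert \<Rightarrow> 'a) \<Rightarrow> bool" where
  "sym_op T \<longleftrightarrow> (\<forall>x y. cinner (T x) y = cinner x (T y))"

lemma positive_cblinear: "positive_op P \<Longrightarrow> cblinear P"
  by (simp add: positive_op_def)

lemma positive_sym:
  assumes P: "positive_op P"
  shows "sym_op P"
  unfolding sym_op_def
proof (intro allI)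
  fix x y
  have Pl: "cblinear P" using P by (simp add: positive_op_def)
  have im: "Im (cinner (P z) z) = 0" for z using P by (simp add: positive_op_def)
  have e1: "cinner (P (x + y)) (x + y) = cinner (P x) x + cinner (P x) y + cinner (P y) x + cinner (P y) y"
    by (simp add: cblinear_add[OF Pl] cinner_add_left cinner_add_right)
  have h1: "Im (cinner (P x) y) + Im (cinner (P y) x) = 0"
    using im[of "x + y"] im[of x] im[of y] unfolding e1 by simp
  have e2: "cinner (P (x + \<i> *\<^sub>C y)) (x + \<i> *\<^sub>C y) =
     cinner (P x) x + \<i> * cinner (P x) y - \<i> * cinner (P y) x + cinner (P y) y"
    by (simp add: cblinear_add[OF Pl] cblinear_scaleC[OF Pl] cinner_add_left cinner_add_right
        cinner_scaleC_left cinner_scaleC_right algebra_simps)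
  have h2: "Re (cinner (P x) y) - Re (cinner (P y) x) = 0"
    using im[of "x + \<i> *\<^sub>C y"] im[of x] im[of y] unfolding e2 by simp
  have "cinner (P x) y = cnj (cinner (P y) x)"
    using h1 h2 by (simp add: complex_eq_iff)
  then show "cinner (P x) y = cinner x (P y)"
    using cinner_conj[of x "P y"] by simp
qed

lemma sym_opD: "sym_op T \<Longrightarrow> cinner (T x) y = cinner x (T y)"
  by (simp add: sym_op_def)

lemma positive_zero:
  assumes P: "positive_op P" and z: "Re (cinner (P y) y) = 0"
  shows "P y = 0"
proof -
  have Pl: "cblinear P" using P by (simp add: positive_op_def)
  have Ps: "sym_op P" by (rule positive_sym[OF P])
  define v where "v = P y"
  define a where "a = (norm v)\<^sup>2"
  define c where "c = Re (cinner (P v) v)"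
  have c0: "c \<ge> 0" using P by (simp add: positive_op_def c_def)
  have key: "0 \<le> 2 * t * a + t\<^sup>2 * c" for t
  proof -
    have "0 \<le> Re (cinner (P (y + t *\<^sub>R v)) (y + t *\<^sub>R v))" using P by (simp add: positive_op_def)
    also have "cinner (P (y + t *\<^sub>R v)) (y + t *\<^sub>R v) =
        cinner (P y) y + t *\<^sub>R cinner (P y) v + t *\<^sub>R cinner (P v) y + (t * t) *\<^sub>R cinner (P v) v"
      by (simp add: cblinear_add[OF Pl] cblinear_scaleR[OF Pl] cinner_add_left cinner_add_right
          cinner_scaleR_left cinner_scaleR_right algebra_simps)
    also have "cinner (P v) y = cinner v v" using sym_opD[OF Ps, of v y] by (simp add: v_def)
    also have "cinner (P y) v = cinner v v" by (simp add: v_def)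
    finally have H: "0 \<le> Re (cinner (P y) y + t *\<^sub>R cinner v v + t *\<^sub>R cinner v v + (t * t) *\<^sub>R cinner (P v) v)" .
    have av: "Re (cinner v v) = a" by (simp add: a_def norm_sq_cinner)
    show ?thesis using H z unfolding av[symmetric] c_def by (simp add: power2_eq_square algebra_simps)
  qed
  define t where "t = - a / (c + 1)"
  have "0 \<le> (c + 1)\<^sup>2 * (2 * t * a + t\<^sup>2 * c)" using key[of t] by simp
  also have "(c + 1)\<^sup>2 * (2 * t * a + t\<^sup>2 * c) = 2 * a * (c + 1) * (t * (c + 1)) + (t * (c + 1))\<^sup>2 * c"
    by (simp add: power2_eq_square algebra_simps)
  also have "t * (c + 1) = - a" using c0 by (simp add: t_def)
  also have "2 * a * (c + 1) * (- a) + (- a)\<^sup>2 * c = - (a\<^sup>2 * (c + 2))"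
    by (simp add: power2_eq_square algebra_simps)
  finally have "a\<^sup>2 * (c + 2) \<le> 0" by simp
  then have "a\<^sup>2 \<le> 0" using c0 by (simp add: mult_le_0_iff)
  then have "a = 0" by simp
  then show ?thesis by (simp add: a_def v_def)
qed

locale sqrt_ctx =
  fixes C :: "'a::chilbert \<Rightarrow> 'a"
  assumes Cl: "cblinear C" and Cs: "sym_op C" and Cc: "\<And>x. norm (C x) \<le> norm x"
begin

lemma Cn_norm: "norm ((C ^^ n) x) \<le> norm x"
  by (induction n) (auto intro: order_trans[OF Cc])

lemma Cn_l: "cblinear (C ^^ n)"
  by (rule cblinear_funpow[OF Cl])

lemma Cn_sym: "cinner ((C ^^ n) x) y = cinner x ((C ^^ n) y)"
proof (induction n arbitrary: x y)
  case 0 then show ?case by simp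
next
  case (Suc n)
  have "cinner ((C ^^ Suc n) x) y = cinner ((C ^^ n) x) (C y)"
    using sym_opD[OF Cs] by simp
  also have "\<dots> = cinner x ((C ^^ n) (C y))" by (rule Suc)
  also have "(C ^^ n) (C y) = (C ^^ Suc n) y" by (simp add: funpow_swap1)
  finally show ?case .
qed

lemma sqt_norm: "norm (sqc n *\<^sub>R (C ^^ n) x) \<le> \<bar>sqc n\<bar> * norm x"
  using Cn_norm[of n x] by (simp add: mult_left_mono)

lemma sqt_abs_summable: "summable (\<lambda>n. norm (sqc n *\<^sub>R (C ^^ n) x))"
  by (rule summable_comparison_test'[where g="\<lambda>n. \<bar>sqc n\<bar> * norm x" and N=0])
     (use sqt_norm summable_mult2[OF sqc_abs_summable] in auto)

lemma sqt_summable: "summable (\<lambda>n. sqc n *\<^sub>R (C ^^ n) x)"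
  by (rule summable_norm_cancel[OF sqt_abs_summable])

definition sq :: "'a \<Rightarrow> 'a" where
  "sq x = (\<Sum>n. sqc n *\<^sub>R (C ^^ n) x)"

definition Bs :: real where "Bs = (\<Sum>n. \<bar>sqc n\<bar>)"

lemma Bs_nonneg: "Bs \<ge> 0"
  unfolding Bs_def by (rule suminf_nonneg[OF sqc_abs_summable]) simp

lemma sq_norm: "norm (sq x) \<le> Bs * norm x"
proof -
  have "norm (sq x) \<le> (\<Sum>n. norm (sqc n *\<^sub>R (C ^^ n) x))"
    unfolding sq_def by (rule summable_norm[OF sqt_abs_summable])
  also have "\<dots> \<le> (\<Sum>n. \<bar>sqc n\<bar> * norm x)"
    by (rule suminf_le[OF sqt_norm sqt_abs_summable summable_mult2[OF sqc_abs_summable]])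
  also have "\<dots> = Bs * norm x"
    unfolding Bs_def by (rule suminf_mult2[OF sqc_abs_summable, symmetric])
  finally show ?thesis .
qed

lemma sq_add: "sq (x + y) = sq x + sq y"
  unfolding sq_def
  by (simp add: suminf_add[OF sqt_summable sqt_summable] cblinear_add[OF Cn_l] scaleR_add_right)

lemma sq_scaleC: "sq (c *\<^sub>C x) = c *\<^sub>C sq x"
proof -
  have "c *\<^sub>C sq x = (\<Sum>n. c *\<^sub>C (sqc n *\<^sub>R (C ^^ n) x))"
    unfolding sq_def by (rule bounded_linear.suminf[OF bounded_linear_scaleC sqt_summable])
  also have "\<dots> = sq (c *\<^sub>C x)"
    unfolding sq_def
    by (simp add: cblinear_scaleC[OF Cn_l] scaleR_scaleC scaleC_scaleC mult.commute)
  finally show ?thesis by simp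
qed

lemma sq_l: "cblinear sq"
  by (rule cblinearI[OF sq_add sq_scaleC]) (use sq_norm in \<open>simp add: mult.commute\<close>)

lemma sq_commute:
  assumes R: "cblinear R" and RC: "\<And>x. R (C x) = C (R x)"
  shows "R (sq x) = sq (R x)"
proof -
  have Rn: "R ((C ^^ n) y) = (C ^^ n) (R y)" for n y
    by (induction n) (simp_all add: RC)
  have "R (sq x) = (\<Sum>n. R (sqc n *\<^sub>R (C ^^ n) x))"
    unfolding sq_def by (rule bounded_linear.suminf[OF cblinear_bounded_linear[OF R] sqt_summable])
  also have "\<dots> = sq (R x)"
    unfolding sq_def by (simp add: cblinear_scaleR[OF R] Rn)
  finally show ?thesis .
qed

lemma sq_cinner_left: "cinner (sq x) y = (\<Sum>n. sqc n *\<^sub>R cinner ((C ^^ n) x) y)"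
proof -
  have "cinner (sq x) y = (\<Sum>n. cinner (sqc n *\<^sub>R (C ^^ n) x) y)"
    unfolding sq_def by (rule bounded_linear.suminf[OF bounded_linear_cinner_left sqt_summable])
  then show ?thesis by (simp add: cinner_scaleR_left)
qed

lemma sq_cinner_right: "cinner x (sq y) = (\<Sum>n. sqc n *\<^sub>R cinner x ((C ^^ n) y))"
proof -
  have "cinner x (sq y) = (\<Sum>n. cinner x (sqc n *\<^sub>R (C ^^ n) y))"
    unfolding sq_def by (rule bounded_linear.suminf[OF bounded_linear_cinner_right sqt_summable])
  then show ?thesis by (simp add: cinner_scaleR_right)
qed

lemma sq_sym: "sym_op sq"
  unfolding sym_op_def by (simp add: sq_cinner_left sq_cinner_right Cn_sym)

lemma sq_pos: "Im (cinner (sq x) x) = 0 \<and> Re (cinner (sq x) x) \<ge> 0"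
proof -
  define z where "z n = cinner ((C ^^ n) x) x" for n
  have zb: "cmod (z n) \<le> (norm x)\<^sup>2" for n
  proof -
    have "cmod (z n) \<le> norm ((C ^^ n) x) * norm x" unfolding z_def by (rule cauchy_schwarz)
    also have "\<dots> \<le> norm x * norm x" using Cn_norm by (simp add: mult_right_mono)
    finally show ?thesis by (simp add: power2_eq_square)
  qed
  have zreal: "Im (z n) = 0" for n
  proof -
    have "z n = cinner x ((C ^^ n) x)" unfolding z_def by (rule Cn_sym)
    also have "\<dots> = cnj (z n)" unfolding z_def by (rule cinner_conj)
    finally show ?thesis by (simp add: complex_eq_iff)
  qed
  have summ: "summable (\<lambda>n. sqc n *\<^sub>R z n)"
    by (rule summable_comparison_test'[where g="\<lambda>n. \<bar>sqc n\<bar> * (norm x)\<^sup>2" and N=0])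
       (use zb summable_mult2[OF sqc_abs_summable] in \<open>auto simp: mult_left_mono\<close>)
  have eq: "cinner (sq x) x = (\<Sum>n. sqc n *\<^sub>R z n)"
    unfolding z_def by (rule sq_cinner_left)
  have "Im (cinner (sq x) x) = (\<Sum>n. Im (sqc n *\<^sub>R z n))"
    unfolding eq by (rule Im_suminf[OF summ])
  also have "\<dots> = 0" by (simp add: zreal)
  finally have im: "Im (cinner (sq x) x) = 0" .
  have re: "Re (cinner (sq x) x) = (\<Sum>n. sqc n * Re (z n))"
    unfolding eq using Re_suminf[OF summ] by simp
  have summ2: "summable (\<lambda>n. sqc n * Re (z n))"
    using bounded_linear.summable[OF bounded_linear_Re summ] by simp
  have "(\<Sum>n. sqc n * (norm x)\<^sup>2) \<le> (\<Sum>n. sqc n * Re (z n))"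
  proof (rule suminf_le[OF _ summable_mult2[OF sqc_summable] summ2])
    fix n
    show "sqc n * (norm x)\<^sup>2 \<le> sqc n * Re (z n)"
    proof (cases "n = 0")
      case True then show ?thesis by (simp add: z_def norm_sq_cinner)
    next
      case False
      then have "sqc n \<le> 0" using sqc_nonpos by simp
      moreover have "Re (z n) \<le> (norm x)\<^sup>2" using zb[of n] complex_Re_le_cmod[of "z n"] by linarith
      ultimately show ?thesis using mult_left_mono_neg by blast
    qed
  qed
  moreover have "(\<Sum>n. sqc n * (norm x)\<^sup>2) = suminf sqc * (norm x)\<^sup>2"
    by (rule suminf_mult2[OF sqc_summable, symmetric])
  moreover have "suminf sqc * (norm x)\<^sup>2 \<ge> 0" using sqc_suminf_nonneg by simp
  ultimately show ?thesis using im re by linarith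
qed

lemma sq_positive: "positive_op sq"
  unfolding positive_op_def using sq_l sq_pos by blast

definition Pn :: "nat \<Rightarrow> 'a \<Rightarrow> 'a" where
  "Pn n y = (\<Sum>j<n. sqc j *\<^sub>R (C ^^ j) y)"

lemma Pn_norm: "norm (Pn n y) \<le> Bs * norm y"
proof -
  have "norm (Pn n y) \<le> (\<Sum>j<n. norm (sqc j *\<^sub>R (C ^^ j) y))"
    unfolding Pn_def by (rule norm_sum)
  also have "\<dots> \<le> (\<Sum>j<n. \<bar>sqc j\<bar> * norm y)" by (intro sum_mono sqt_norm)
  also have "\<dots> = (\<Sum>j<n. \<bar>sqc j\<bar>) * norm y" by (simp add: sum_distrib_right)
  also have "\<dots> \<le> Bs * norm y"
    unfolding Bs_def by (intro mult_right_mono sum_le_suminf[OF sqc_abs_summable]) auto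
  finally show ?thesis .
qed

lemma Pn_diff: "Pn n y - Pn n y' = Pn n (y - y')"
  unfolding Pn_def by (simp add: cblinear_diff[OF Cn_l] scaleR_diff_right sum_subtractf)

lemma Pn_lim: "(\<lambda>n. Pn n y) \<longlonglongrightarrow> sq y"
  unfolding Pn_def sq_def by (rule summable_LIMSEQ[OF sqt_summable])

lemma sq_sq: "sq (sq x) = x - C x"
proof -
  define g where "g i j = sqc i *\<^sub>R (C ^^ i) (sqc j *\<^sub>R (C ^^ j) x)" for i j
  have gb: "norm (g i j) \<le> \<bar>sqc i\<bar> * (\<bar>sqc j\<bar> * norm x)" for i j
  proof -
    have "norm (g i j) \<le> \<bar>sqc i\<bar> * norm (sqc j *\<^sub>R (C ^^ j) x)"
      unfolding g_def by (rule sqt_norm)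
    also have "\<dots> \<le> \<bar>sqc i\<bar> * (\<bar>sqc j\<bar> * norm x)" by (intro mult_left_mono sqt_norm) auto
    finally show ?thesis .
  qed
  have rect: "(\<Sum>i<n. \<Sum>j<n. g i j) = Pn n (Pn n x)" for n
    unfolding g_def Pn_def
    by (simp add: cblinear_sum[OF Cn_l] cblinear_scaleR[OF Cn_l] scaleR_sum_right)
  have lim: "(\<lambda>n. \<Sum>i<n. \<Sum>j<n. g i j) \<longlonglongrightarrow> sq (sq x)"
  proof -
    have "(\<lambda>n. Pn n (Pn n x) - Pn n (sq x)) \<longlonglongrightarrow> 0"
    proof (rule Lim_null_comparison)
      show "\<forall>\<^sub>F n in sequentially. norm (Pn n (Pn n x) - Pn n (sq x)) \<le> Bs * norm (Pn n x - sq x)"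
        by (simp add: Pn_diff Pn_norm)
      have "(\<lambda>n. Pn n x - sq x) \<longlonglongrightarrow> 0" using Pn_lim[of x] by (simp add: LIM_zero)
      then have "(\<lambda>n. norm (Pn n x - sq x)) \<longlonglongrightarrow> 0" by (rule tendsto_norm_zero)
      then show "(\<lambda>n. Bs * norm (Pn n x - sq x)) \<longlonglongrightarrow> 0"
        using tendsto_mult_right_zero by blast
    qed
    then have "(\<lambda>n. (Pn n (Pn n x) - Pn n (sq x)) + Pn n (sq x)) \<longlonglongrightarrow> 0 + sq (sq x)"
      by (intro tendsto_add Pn_lim)
    then show ?thesis by (simp add: rect)
  qed
  have "(\<lambda>k. \<Sum>i\<le>k. g i (k - i)) sums sq (sq x)"
    by (rule cauchy_gen[OF _ _ sqc_abs_summable summable_mult2[OF sqc_abs_summable] gb lim]) auto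
  moreover have "(\<Sum>i\<le>k. g i (k - i)) = (if k = 0 then 1 else if k = 1 then -1 else 0) *\<^sub>R (C ^^ k) x" for k
  proof -
    have "(\<Sum>i\<le>k. g i (k - i)) = (\<Sum>i\<le>k. (sqc i * sqc (k - i)) *\<^sub>R (C ^^ k) x)"
    proof (intro sum.cong refl)
      fix i assume "i \<in> {..k}"
      then have "i + (k - i) = k" by simp
      then have "(C ^^ i) ((C ^^ (k - i)) x) = (C ^^ k) x"
        by (metis funpow_add o_apply)
      then show "g i (k - i) = (sqc i * sqc (k - i)) *\<^sub>R (C ^^ k) x"
        unfolding g_def by (simp add: cblinear_scaleR[OF Cn_l])
    qed
    also have "\<dots> = (\<Sum>i\<le>k. sqc i * sqc (k - i)) *\<^sub>R (C ^^ k) x"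
      by (simp add: scaleR_sum_left)
    finally show ?thesis by (simp add: sqc_cauchy)
  qed
  ultimately have s1: "(\<lambda>k. (if k = 0 then 1 else if k = 1 then -1 else 0) *\<^sub>R (C ^^ k) x) sums sq (sq x)"
    by simp
  have s2: "(\<lambda>k. (if k = 0 then 1 else if k = 1 then -1 else 0) *\<^sub>R (C ^^ k) x) sums
      (\<Sum>k\<in>{0,1}. (if k = 0 then 1 else if k = 1 then -1 else 0) *\<^sub>R (C ^^ k) x)"
    by (rule sums_finite) auto
  have "(\<Sum>k\<in>{0::nat,1}. (if k = 0 then 1 else if k = 1 then -1 else (0::real)) *\<^sub>R (C ^^ k) x) = x - C x"
    by simp
  then show ?thesis using sums_unique2[OF s1 s2] by simp
qed

lemma sqrt_unique:
  assumes R: "positive_op R" and RR: "\<And>x. R (R x) = x - C x"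
  shows "R = sq"
proof -
  have Rl: "cblinear R" using R by (simp add: positive_op_def)
  have RC: "R (C x) = C (R x)" for x
  proof -
    have "R (R (R x)) = R x - C (R x)" by (rule RR)
    moreover have "R (R (R x)) = R (x - C x)" by (simp add: RR)
    ultimately have "R (x - C x) = R x - C (R x)" by simp
    then show ?thesis by (simp add: cblinear_diff[OF Rl])
  qed
  have SR: "R (sq x) = sq (R x)" for x by (rule sq_commute[OF Rl RC])
  have "sq x = R x" for x
  proof -
    define y where "y = sq x - R x"
    have "sq y + R y = 0"
      unfolding y_def
      by (simp add: cblinear_diff[OF Rl] cblinear_diff[OF sq_l] sq_sq RR SR)
    then have "cinner (sq y) y + cinner (R y) y = 0"
      using cinner_add_left[of "sq y" "R y" y] by simp
    then have "Re (cinner (sq y) y + cinner (R y) y) = 0" by simp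
    then have "Re (cinner (sq y) y) + Re (cinner (R y) y) = 0" by (simp only: plus_complex.sel)
    moreover have "Re (cinner (sq y) y) \<ge> 0" using sq_pos by blast
    moreover have "Re (cinner (R y) y) \<ge> 0" using R by (simp add: positive_op_def)
    ultimately have "Re (cinner (sq y) y) = 0" "Re (cinner (R y) y) = 0" by linarith+
    then have "sq y = 0" "R y = 0" using positive_zero[OF sq_positive] positive_zero[OF R] by auto
    then have yy: "sq y - R y = 0" by simp
    have "cinner y y = cinner (sq x) y - cinner (R x) y" by (simp add: y_def cinner_diff_left)
    also have "\<dots> = cinner x (sq y) - cinner x (R y)"
      using sym_opD[OF sq_sym] sym_opD[OF positive_sym[OF R]] by simp
    also have "\<dots> = cinner x (sq y - R y)" by (simp add: cinner_diff_right)
    also have "\<dots> = 0" using yy by simp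
    finally show ?thesis by (simp add: y_def)
  qed
  then show ?thesis by auto
qed

lemma op_sqrt_eq: "op_sqrt (\<lambda>x. x - C x) = sq"
  unfolding op_sqrt_def
proof (rule the_equality)
  show "positive_op sq \<and> sq \<circ> sq = (\<lambda>x. x - C x)"
    using sq_positive sq_sq by auto
  fix R assume "positive_op R \<and> R \<circ> R = (\<lambda>x. x - C x)"
  then show "R = sq" using sqrt_unique by (metis comp_apply)
qed

lemma op_sqrt_props:
  "positive_op (op_sqrt (\<lambda>x. x - C x))" "\<And>x. op_sqrt (\<lambda>x. x - C x) (op_sqrt (\<lambda>x. x - C x) x) = x - C x"
  "sym_op (op_sqrt (\<lambda>x. x - C x))"
  unfolding op_sqrt_eq using sq_positive sq_sq sq_sym by auto

end


lemma cspan_finite_iff: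
  assumes "finite B"
  shows "x \<in> cspan B \<longleftrightarrow> (\<exists>c. x = (\<Sum>b\<in>B. c b *\<^sub>C b))"
proof
  assume "x \<in> cspan B"
  then obtain F c where F: "x = (\<Sum>b\<in>F. c b *\<^sub>C b)" "finite F" "F \<subseteq> B"
    unfolding cspan_def by blast
  define c' where "c' b = (if b \<in> F then c b else 0)" for b
  have "(\<Sum>b\<in>B. c' b *\<^sub>C b) = (\<Sum>b\<in>F. c' b *\<^sub>C b)"
    using F assms by (intro sum.mono_neutral_cong_right) (auto simp: c'_def)
  also have "\<dots> = x" using F by (simp add: c'_def)
  finally show "\<exists>c. x = (\<Sum>b\<in>B. c b *\<^sub>C b)" by metis
next
  assume "\<exists>c. x = (\<Sum>b\<in>B. c b *\<^sub>C b)"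
  then show "x \<in> cspan B" using assms unfolding cspan_def by blast
qed

lemma cspan_finite_eq: "finite B \<Longrightarrow> cspan B = {x. \<exists>c. x = (\<Sum>b\<in>B. c b *\<^sub>C b)}"
  using cspan_finite_iff by blast

lemma csubspace_cspan:
  assumes "finite B"
  shows "csubspace (cspan B)"
proof -
  let ?S = "{x. \<exists>c. x = (\<Sum>b\<in>B. c b *\<^sub>C b)}"
  have "0 \<in> ?S" by (intro CollectI exI[where x="\<lambda>_. 0"]) simp
  moreover have "x + y \<in> ?S" if xS: "x \<in> ?S" and yS: "y \<in> ?S" for x y
  proof -
    obtain c d where "x = (\<Sum>b\<in>B. c b *\<^sub>C b)" "y = (\<Sum>b\<in>B. d b *\<^sub>C b)" using xS yS by blast
    then have "x + y = (\<Sum>b\<in>B. (c b + d b) *\<^sub>C b)"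
      by (simp add: scaleC_add_left sum.distrib)
    then show ?thesis by (intro CollectI exI[where x="\<lambda>b. c b + d b"])
  qed
  moreover have "a *\<^sub>C x \<in> ?S" if xS: "x \<in> ?S" for a x
  proof -
    obtain c where "x = (\<Sum>b\<in>B. c b *\<^sub>C b)" using xS by blast
    then have "a *\<^sub>C x = (\<Sum>b\<in>B. (a * c b) *\<^sub>C b)"
      by (simp add: scaleC_sum_right scaleC_scaleC)
    then show ?thesis by (intro CollectI exI[where x="\<lambda>b. a * c b"])
  qed
  ultimately show ?thesis unfolding csubspace_def cspan_finite_eq[OF assms] by blast
qed

lemma cspan_real_span:
  assumes "finite B"
  shows "cspan B \<subseteq> span (B \<union> (\<lambda>b. \<i> *\<^sub>C b) ` B)"
proof
  fix x assume "x \<in> cspan B"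
  then obtain c where x: "x = (\<Sum>b\<in>B. c b *\<^sub>C b)" using cspan_finite_iff[OF assms] by blast
  have "c b *\<^sub>C b = Re (c b) *\<^sub>R b + Im (c b) *\<^sub>R (\<i> *\<^sub>C b)" for b
  proof -
    have "c b = complex_of_real (Re (c b)) + complex_of_real (Im (c b)) * \<i>"
      by (simp add: complex_eq_iff)
    then have "c b *\<^sub>C b = complex_of_real (Re (c b)) *\<^sub>C b + (complex_of_real (Im (c b)) * \<i>) *\<^sub>C b"
      by (metis scaleC_add_left)
    then show ?thesis by (simp add: scaleR_scaleC scaleC_scaleC)
  qed
  then have "x = (\<Sum>b\<in>B. Re (c b) *\<^sub>R b + Im (c b) *\<^sub>R (\<i> *\<^sub>C b))" by (simp add: x)
  also have "\<dots> \<in> span (B \<union> (\<lambda>b. \<i> *\<^sub>C b) ` B)"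
    by (intro span_sum span_add span_scale span_base) auto
  finally show "x \<in> span (B \<union> (\<lambda>b. \<i> *\<^sub>C b) ` B)" .
qed

lemma csubspace_subspace: "csubspace K \<Longrightarrow> subspace K"
  unfolding subspace_def by (auto intro: csubspace_add csubspace_scaleR csubspace_0)

lemma closed_cblinear_eq:
  assumes "cblinear S" shows "closed {x. S x = x}"
proof -
  have "continuous_on UNIV S"
    using bounded_linear.continuous_on[OF cblinear_bounded_linear[OF assms] continuous_on_id] by simp
  then show ?thesis by (intro closed_Collect_eq continuous_on_id)
qed

locale main_ctx =
  fixes T :: "'a::chilbert \<Rightarrow> 'a"
  assumes Tc: "contraction_op T"
    and cnu: "completely_non_unitary T"
    and Dinc: "defect_space T \<subseteq> defect_space (adj T)"
    and Dfin: "finite_dim_set (defect_space (adj T))"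
begin

lemma Tl: "cblinear T" using Tc by (simp add: contraction_op_def)
lemma Tn: "norm (T x) \<le> norm x" using Tc by (simp add: contraction_op_def)
lemma Tsl: "cblinear (adj T)" by (rule adj_cblinear[OF Tl])
lemma Tsn: "norm (adj T x) \<le> norm x" by (rule adj_contraction[OF Tl Tn])

lemma ctx1: "sqrt_ctx (\<lambda>x. adj T (T x))"
proof
  show "cblinear (\<lambda>x. adj T (T x))" by (rule cblinear_compose[OF Tsl Tl])
  show "sym_op (\<lambda>x. adj T (T x))"
    unfolding sym_op_def by (simp add: adj_prop[OF Tl] adj_prop'[OF Tl])
  show "norm (adj T (T x)) \<le> norm x" for x using Tsn Tn order_trans by blast
qed

lemma ctx2: "sqrt_ctx (\<lambda>x. T (adj T x))"
proof
  show "cblinear (\<lambda>x. T (adj T x))" by (rule cblinear_compose[OF Tl Tsl])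
  show "sym_op (\<lambda>x. T (adj T x))"
    unfolding sym_op_def by (simp add: adj_prop[OF Tl] adj_prop'[OF Tl])
  show "norm (T (adj T x)) \<le> norm x" for x using Tsn Tn order_trans by blast
qed

definition S1 where "S1 = op_sqrt (\<lambda>x. x - adj T (T x))"
definition S2 where "S2 = op_sqrt (\<lambda>x. x - T (adj T x))"

lemma S1: "positive_op S1" "\<And>x. S1 (S1 x) = x - adj T (T x)" "sym_op S1"
  unfolding S1_def using sqrt_ctx.op_sqrt_props[OF ctx1] by auto
lemma S2: "positive_op S2" "\<And>x. S2 (S2 x) = x - T (adj T x)" "sym_op S2"
  unfolding S2_def using sqrt_ctx.op_sqrt_props[OF ctx2] by auto

lemma D1: "defect_space T = closure (range S1)"
  by (simp add: defect_space_def S1_def)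
lemma D2: "defect_space (adj T) = closure (range S2)"
  by (simp add: defect_space_def S2_def adj_adj[OF Tl])

definition W where "W = {x. adj T (T x) = x}"

lemma W_csub: "csubspace W"
  unfolding W_def csubspace_def
  by (simp add: cblinear_add[OF Tl] cblinear_add[OF Tsl] cblinear_scaleC[OF Tl] cblinear_scaleC[OF Tsl]
      cblinear_zero[OF Tl] cblinear_zero[OF Tsl])

lemma W_closed: "closed W"
  unfolding W_def by (rule closed_cblinear_eq[OF cblinear_compose[OF Tsl Tl]])

lemma W_iso: "x \<in> W \<Longrightarrow> norm (T x) = norm x"
proof -
  assume "x \<in> W"
  then have "cinner (T x) (T x) = cinner x x" by (simp add: adj_prop[OF Tl] W_def)
  then have "(norm (T x))\<^sup>2 = (norm x)\<^sup>2" by (simp add: norm_sq_cinner)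
  then show ?thesis by (simp add: power2_eq_iff_nonneg)
qed

lemma W_inj: "x \<in> W \<Longrightarrow> y \<in> W \<Longrightarrow> T x = T y \<Longrightarrow> x = y"
proof -
  assume xy: "x \<in> W" "y \<in> W" "T x = T y"
  have "x - y \<in> W" using xy W_csub by (simp add: csubspace_diff)
  then have "norm (x - y) = norm (T (x - y))" by (simp add: W_iso)
  also have "\<dots> = 0" using xy by (simp add: cblinear_diff[OF Tl])
  finally show ?thesis by simp
qed

lemma F1:
  assumes "\<And>d. d \<in> defect_space T \<Longrightarrow> cinner d x = 0"
  shows "x \<in> W"
proof -
  have "cinner (S1 y) x = 0" for y
    using assms[of "S1 y"] closure_subset[of "range S1"] by (auto simp: D1)
  then have "cinner y (S1 x) = 0" for y using sym_opD[OF S1(3)] by simp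
  then have "S1 x = 0" using cinner_self_eq_0 by blast
  then have "x - adj T (T x) = 0" using S1(2)[of x] cblinear_zero[OF positive_cblinear[OF S1(1)]] by simp
  then show ?thesis by (simp add: W_def)
qed

lemma F2:
  assumes w: "w \<in> W" and d: "d \<in> defect_space (adj T)"
  shows "cinner d (T w) = 0"
proof -
  have "cinner (S2 (T w)) (S2 (T w)) = cinner (T w) (S2 (S2 (T w)))" by (rule sym_opD[OF S2(3)])
  also have "\<dots> = 0" using w by (simp add: S2(2) W_def)
  finally have z: "S2 (T w) = 0" by simp
  have "range S2 \<subseteq> {d. cinner d (T w) = 0}"
  proof
    fix d assume "d \<in> range S2"
    then obtain y where "d = S2 y" by blast
    then show "d \<in> {d. cinner d (T w) = 0}" using sym_opD[OF S2(3), of y "T w"] z by simp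
  qed
  moreover have "closed {d. cinner d (T w) = 0}"
    by (intro closed_Collect_eq continuous_on_const bounded_linear.continuous_on[OF bounded_linear_cinner_left] continuous_on_id)
  ultimately have "closure (range S2) \<subseteq> {d. cinner d (T w) = 0}" by (rule closure_minimal)
  then show ?thesis using d by (auto simp: D2)
qed

lemma TW: "w \<in> W \<Longrightarrow> T w \<in> W"
  using F1 F2 Dinc by blast

lemma D2_props: "\<exists>B. finite B \<and> defect_space (adj T) = cspan B"
  using Dfin unfolding finite_dim_set_def by metis

lemma decomp: obtains B where "finite B" "\<And>x. \<exists>w\<in>W. \<exists>f\<in>cspan B. x = w + f"
proof -
  obtain B where B: "finite B" "defect_space (adj T) = cspan B" using D2_props by blast
  have cs: "csubspace (defect_space (adj T))" using B csubspace_cspan by simp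
  have cl: "closed (defect_space (adj T))" by (simp add: D2)
  have "\<exists>w\<in>W. \<exists>f\<in>cspan B. x = w + f" for x
  proof -
    obtain k where k: "k \<in> defect_space (adj T)" "\<And>v. v \<in> defect_space (adj T) \<Longrightarrow> cinner v (x - k) = 0"
      using projection_exists[OF cs cl, of x] by blast
    have "x - k \<in> W" using k(2) Dinc by (intro F1) blast
    moreover have "x = (x - k) + k" by simp
    ultimately show ?thesis using k(1) B by blast
  qed
  then show ?thesis using that B by blast
qed

definition Wn where "Wn n = (T ^^ n) ` W"

lemma TnW: "x \<in> W \<Longrightarrow> (T ^^ n) x \<in> W"
  by (induction n) (auto intro: TW)

lemma Wn_sub_W: "Wn n \<subseteq> W"
  unfolding Wn_def using TnW by auto

lemma Wn_Suc: "Wn (Suc n) \<subseteq> Wn n"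
proof
  fix y assume "y \<in> Wn (Suc n)"
  then obtain w where w: "w \<in> W" "y = (T ^^ Suc n) w" by (auto simp: Wn_def)
  then have "y = (T ^^ n) (T w)" by (simp add: funpow_swap1)
  then show "y \<in> Wn n" using TW[OF w(1)] by (auto simp: Wn_def)
qed

lemma Wn_mono: "n \<le> m \<Longrightarrow> Wn m \<subseteq> Wn n"
  by (induction m rule: dec_induct) (use Wn_Suc in auto)

lemma Wn_csub: "csubspace (Wn n)"
proof -
  have l: "cblinear (T ^^ n)" by (rule cblinear_funpow[OF Tl])
  show ?thesis unfolding Wn_def csubspace_def
  proof (intro conjI ballI allI)
    show "0 \<in> (T ^^ n) ` W" using csubspace_0[OF W_csub] cblinear_zero[OF l] by force
    show "x + y \<in> (T ^^ n) ` W" if xh: "x \<in> (T ^^ n) ` W" and yh: "y \<in> (T ^^ n) ` W" for x y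
    proof -
      obtain a b where ab: "a \<in> W" "b \<in> W" "x = (T ^^ n) a" "y = (T ^^ n) b" using xh yh by blast
      then have "x + y = (T ^^ n) (a + b)" by (simp add: cblinear_add[OF l])
      moreover have "a + b \<in> W" using ab csubspace_add[OF W_csub] by blast
      ultimately show ?thesis by blast
    qed
    show "c *\<^sub>C x \<in> (T ^^ n) ` W" if xh: "x \<in> (T ^^ n) ` W" for c x
    proof -
      obtain a where ab: "a \<in> W" "x = (T ^^ n) a" using xh by blast
      then have "c *\<^sub>C x = (T ^^ n) (c *\<^sub>C a)" by (simp add: cblinear_scaleC[OF l])
      moreover have "c *\<^sub>C a \<in> W" using ab csubspace_scaleC[OF W_csub] by blast
      ultimately show ?thesis by blast
    qed
  qed
qed

lemma Tn_iso: "x \<in> W \<Longrightarrow> norm ((T ^^ n) x) = norm x"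
  by (induction n) (auto simp: W_iso TnW)

lemma Wn_closed: "closed (Wn n)"
  unfolding closed_sequential_limits
proof (intro allI impI)
  fix y l assume a: "(\<forall>k. y k \<in> Wn n) \<and> y \<longlonglongrightarrow> l"
  have l: "cblinear (T ^^ n)" by (rule cblinear_funpow[OF Tl])
  have ex: "\<forall>k. \<exists>w. w \<in> W \<and> y k = (T ^^ n) w" using a unfolding Wn_def by blast
  obtain w where w0: "\<forall>k. w k \<in> W \<and> y k = (T ^^ n) (w k)"
    using choice[OF ex] by blast
  then have w: "\<And>k. w k \<in> W" "\<And>k. y k = (T ^^ n) (w k)" by auto
  have dist: "norm (w k - w j) = norm (y k - y j)" for k j
  proof -
    have "w k - w j \<in> W" using w(1) W_csub by (simp add: csubspace_diff)
    then show ?thesis using Tn_iso[of "w k - w j" n] by (simp add: w(2) cblinear_diff[OF l])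
  qed
  have "Cauchy y" using a convergent_Cauchy convergent_def by blast
  then have "Cauchy w" unfolding Cauchy_iff using dist by simp
  then obtain w0 where w0: "w \<longlonglongrightarrow> w0" using Cauchy_convergent_iff convergent_def by blast
  have w0W: "w0 \<in> W" using closed_sequentially[OF W_closed] w(1) w0 by blast
  have "(\<lambda>k. (T ^^ n) (w k)) \<longlonglongrightarrow> (T ^^ n) w0"
    by (rule bounded_linear.tendsto[OF cblinear_bounded_linear[OF l] w0])
  moreover have "(\<lambda>k. (T ^^ n) (w k)) = y" using w(2) by auto
  ultimately have "y \<longlonglongrightarrow> (T ^^ n) w0" by simp
  then have "l = (T ^^ n) w0" using a LIMSEQ_unique by blast
  then show "l \<in> Wn n" using w0W by (simp add: Wn_def)
qed

definition Wu where "Wu = (\<Inter>n. Wn n)"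

lemma Wu_sub_W: "Wu \<subseteq> W"
  using Wn_sub_W[of 0] by (auto simp: Wu_def)

lemma T_Wu: "T ` Wu = Wu"
proof
  show "T ` Wu \<subseteq> Wu"
  proof
    fix y assume "y \<in> T ` Wu"
    then obtain x where x: "x \<in> Wu" "y = T x" by blast
    have "y \<in> Wn n" for n
    proof -
      from x(1) have "x \<in> Wn n" by (auto simp: Wu_def)
      then obtain w where "w \<in> W" "x = (T ^^ n) w" by (auto simp: Wn_def)
      then show ?thesis using x(2) TW by (auto simp: Wn_def funpow_swap1)
    qed
    then show "y \<in> Wu" by (auto simp: Wu_def)
  qed
next
  show "Wu \<subseteq> T ` Wu"
  proof
    fix y assume y: "y \<in> Wu"
    then have "y \<in> Wn 1" by (auto simp: Wu_def)
    then obtain w0 where w0: "w0 \<in> W" "y = T w0" by (auto simp: Wn_def)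
    have "w0 \<in> Wn n" for n
    proof -
      have "y \<in> Wn (Suc n)" using y by (auto simp: Wu_def)
      then obtain w where w: "w \<in> W" "y = (T ^^ Suc n) w" by (auto simp: Wn_def)
      then have "T ((T ^^ n) w) = T w0" using w0 by simp
      then have "(T ^^ n) w = w0" using W_inj[OF TnW[OF w(1)] w0(1)] by simp
      then show ?thesis using w(1) by (auto simp: Wn_def)
    qed
    then have "w0 \<in> Wu" by (auto simp: Wu_def)
    then show "y \<in> T ` Wu" using w0 by blast
  qed
qed

lemma Wu_zero: "Wu = {0}"
proof -
  have cs: "csubspace Wu"
    unfolding Wu_def csubspace_def using Wn_csub by (auto simp: csubspace_def)
  have cl: "closed Wu" unfolding Wu_def using Wn_closed by (intro closed_INT) auto
  have adjWu: "adj T ` Wu \<subseteq> Wu"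
  proof
    fix z assume "z \<in> adj T ` Wu"
    then obtain y where y: "y \<in> Wu" "z = adj T y" by blast
    then obtain w where w: "w \<in> Wu" "y = T w" using T_Wu by blast
    have "w \<in> W" using w Wu_sub_W by blast
    then have "z = w" using y w by (simp add: W_def)
    then show "z \<in> Wu" using w by simp
  qed
  have red: "reducing_subspace T Wu"
    unfolding reducing_subspace_def using cs cl T_Wu adjWu by simp
  have un: "unitary_on T Wu"
    unfolding unitary_on_def using T_Wu Wu_sub_W W_iso by blast
  have "Wu = {0} \<or> Wu \<noteq> {0}" by blast
  then show ?thesis using cnu red un unfolding completely_non_unitary_def by blast
qed

end


lemma L1:
  fixes U V Y :: "'a::real_vector set"
  assumes Y: "subspace Y" and U: "finite U" "independent U" and V: "finite V"
    and cov: "\<And>u. u \<in> U \<Longrightarrow> \<exists>y\<in>Y. \<exists>v\<in>span V. u = y + v" and card: "card V < card U"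
  shows "\<exists>z\<in>span U. z \<noteq> 0 \<and> z \<in> Y"
proof -
  have "\<forall>u\<in>U. \<exists>p. fst p \<in> Y \<and> snd p \<in> span V \<and> u = fst p + snd p"
    using cov by fastforce
  then obtain pf where pf: "\<And>u. u \<in> U \<Longrightarrow> fst (pf u) \<in> Y \<and> snd (pf u) \<in> span V \<and> u = fst (pf u) + snd (pf u)"
    by metis
  define yf where "yf u = fst (pf u)" for u
  define vf where "vf u = snd (pf u)" for u
  have yf: "\<And>u. u \<in> U \<Longrightarrow> yf u \<in> Y" and vf: "\<And>u. u \<in> U \<Longrightarrow> vf u \<in> span V"
    and uyv: "\<And>u. u \<in> U \<Longrightarrow> u = yf u + vf u"
    using pf by (auto simp: yf_def vf_def)
  show ?thesis
  proof (cases "inj_on vf U")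
    case False
    then obtain a b where ab: "a \<in> U" "b \<in> U" "a \<noteq> b" "vf a = vf b" by (auto simp: inj_on_def)
    have "a - b = yf a - yf b" using uyv[OF ab(1)] uyv[OF ab(2)] ab(4) by (metis add_diff_cancel_right)
    then have "a - b \<in> Y" using yf ab Y by (simp add: subspace_diff)
    moreover have "a - b \<in> span U" using ab by (intro span_diff span_base)
    moreover have "a - b \<noteq> 0" using ab(3) by simp
    ultimately show ?thesis by blast
  next
    case True
    define S where "S = vf ` U"
    have fS: "finite S" using U by (simp add: S_def)
    have cS: "card S = card U" using True by (simp add: S_def card_image)
    have "S \<subseteq> span V" using vf by (auto simp: S_def)
    then have "dependent S" using independent_span_bound[OF V, of S] cS card by auto
    then obtain w where w: "\<exists>v\<in>S. w v \<noteq> 0" "(\<Sum>v\<in>S. w v *\<^sub>R v) = 0"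
      using dependent_finite[OF fS] by blast
    define c where "c u = w (vf u)" for u
    have s0: "(\<Sum>u\<in>U. c u *\<^sub>R vf u) = 0"
      using w(2) True unfolding S_def c_def by (simp add: sum.reindex)
    define z where "z = (\<Sum>u\<in>U. c u *\<^sub>R u)"
    have "z = (\<Sum>u\<in>U. c u *\<^sub>R yf u + c u *\<^sub>R vf u)"
      unfolding z_def by (intro sum.cong refl) (metis uyv scaleR_add_right)
    also have "\<dots> = (\<Sum>u\<in>U. c u *\<^sub>R yf u)" using s0 by (simp add: sum.distrib)
    finally have zY: "z \<in> Y" using Y yf by (simp add: subspace_sum subspace_scale)
    have zU: "z \<in> span U" unfolding z_def by (intro span_sum span_scale span_base)
    have "z \<noteq> 0"
    proof
      assume "z = 0"
      then have "\<forall>u\<in>U. c u = 0"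
        using U(2) dependent_finite[OF U(1)] unfolding z_def by blast
      moreover obtain u where "u \<in> U" "w (vf u) \<noteq> 0" using w(1) by (auto simp: S_def)
      ultimately show False by (auto simp: c_def)
    qed
    then show ?thesis using zY zU by blast
  qed
qed

lemma sub_dim_eq:
  fixes S T' U :: "'a::real_vector set"
  assumes S: "subspace S" and T: "subspace T'" and ST: "S \<subseteq> T'" and TU: "T' \<subseteq> span U"
    and U: "finite U" and d: "dim T' \<le> dim S"
  shows "S = T'"
proof (rule ccontr)
  assume ne: "S \<noteq> T'"
  then obtain t where t: "t \<in> T'" "t \<notin> S" using ST by blast
  obtain A where A: "A \<subseteq> S" "independent A" "S \<subseteq> span A" "card A = dim S" by (rule basis_exists)
  obtain B where B: "B \<subseteq> T'" "independent B" "T' \<subseteq> span B" "card B = dim T'" by (rule basis_exists)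
  have fB: "finite B" using independent_span_bound[OF U B(2)] B(1) TU by blast
  have fA: "finite A" using independent_span_bound[OF U A(2)] A(1) ST TU by blast
  have "span A \<subseteq> S" using A(1) S by (rule span_minimal)
  then have tA: "t \<notin> span A" using t by blast
  have "independent (insert t A)" by (rule independent_insertI[OF tA A(2)])
  moreover have "insert t A \<subseteq> span B" using t A(1) ST B(3) by blast
  ultimately have "card (insert t A) \<le> card B" using independent_span_bound[OF fB] by blast
  moreover have "t \<notin> A" using tA span_base by blast
  ultimately have "card A + 1 \<le> card B" using fA by simp
  then show False using A(4) B(4) d by simp
qed

lemma stab:
  fixes K :: "nat \<Rightarrow> 'a::real_vector set"
  assumes sub: "\<And>n. subspace (K n)" and dec: "\<And>n. K (Suc n) \<subseteq> K n"
    and U: "finite U" and KU: "\<And>n. K n \<subseteq> span U"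
  shows "\<exists>n0. \<forall>n\<ge>n0. K n = K n0"
proof -
  obtain n0 where n0: "\<forall>n. dim (K n0) \<le> dim (K n)"
    using ex_has_least_nat[of "\<lambda>_. True" 0 "\<lambda>n. dim (K n)"] by blast
  have "K n = K n0" if "n \<ge> n0" for n
  proof (rule sub_dim_eq[OF sub sub _ KU U])
    show "K n \<subseteq> K n0" using lift_Suc_antimono_le[of K, OF dec that] by simp
    show "dim (K n0) \<le> dim (K n)" using n0 by blast
  qed
  then show ?thesis by blast
qed

section \<open>Polynomials applied to operators\<close>

fun hornv :: "('a::chilbert \<Rightarrow> 'a) \<Rightarrow> complex list \<Rightarrow> 'a \<Rightarrow> 'a" where
  "hornv T [] z = 0"
| "hornv T (a # as) z = a *\<^sub>C z + T (hornv T as z)"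

definition evp :: "('a::chilbert \<Rightarrow> 'a) \<Rightarrow> complex poly \<Rightarrow> 'a \<Rightarrow> 'a" where
  "evp T p z = hornv T (coeffs p) z"

context
  fixes T :: "'a::chilbert \<Rightarrow> 'a"
  assumes Tl: "cblinear T"
begin

lemma evp_0[simp]: "evp T 0 z = 0"
  by (simp add: evp_def)

lemma evp_pCons: "evp T (pCons a p) z = a *\<^sub>C z + T (evp T p z)"
  by (cases "coeffs p = [] \<and> a = 0") (auto simp: evp_def cCons_def cblinear_zero[OF Tl])

lemma evp_add: "evp T (p + q) z = evp T p z + evp T q z"
  by (induction p q rule: poly_induct2)
     (simp_all add: evp_pCons cblinear_add[OF Tl] scaleC_add_left algebra_simps)

lemma evp_diff: "evp T (p - q) z = evp T p z - evp T q z"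
  using evp_add[of "p - q" q z] by (simp add: algebra_simps)

lemma evp_smult: "evp T (smult c p) z = c *\<^sub>C evp T p z"
  by (induction p) (simp_all add: evp_pCons cblinear_scaleC[OF Tl] scaleC_add_right scaleC_scaleC)

lemma evp_mult: "evp T (p * q) z = evp T p (evp T q z)"
  by (induction p) (simp_all add: evp_pCons evp_add evp_smult)

lemma evp_T: "evp T p (T z) = T (evp T p z)"
  by (induction p) (simp_all add: evp_pCons cblinear_add[OF Tl] cblinear_scaleC[OF Tl] cblinear_zero[OF Tl])

lemma evp_monom: "evp T (monom c n) z = c *\<^sub>C (T ^^ n) z"
proof (induction n)
  case 0 then show ?case by (simp add: monom_0 evp_pCons cblinear_zero[OF Tl])
next
  case (Suc n) then show ?case by (simp add: monom_Suc evp_pCons cblinear_scaleC[OF Tl])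
qed

lemma evp_sum: "evp T (\<Sum>i\<in>I. p i) z = (\<Sum>i\<in>I. evp T (p i) z)"
  by (induction I rule: infinite_finite_induct) (simp_all add: evp_add)

lemma funpow_zero: "(T ^^ n) 0 = 0"
  by (induction n) (simp_all add: cblinear_zero[OF Tl])

lemma eig:
  assumes "p \<noteq> 0" "evp T p z = 0" "(T ^^ degree p) z \<noteq> 0"
  shows "\<exists>c. c \<noteq> 0 \<and> eigenvalue T c"
  using assms
proof (induction "degree p" arbitrary: p z rule: less_induct)
  case less
  obtain a r where p: "p = pCons a r" by (cases p)
  show ?case
  proof (cases "r = 0")
    case True
    then have "degree p = 0" "a \<noteq> 0" using p less.prems(1) by auto
    moreover have "a *\<^sub>C z = 0" using less.prems(2) p True by (simp add: evp_pCons cblinear_zero[OF Tl])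
    then have "inverse a *\<^sub>C (a *\<^sub>C z) = 0" by simp
    ultimately have "z = 0" by (simp add: scaleC_scaleC scaleC_one)
    then show ?thesis using less.prems(3) by (simp add: funpow_zero)
  next
    case False
    have dp: "degree p = Suc (degree r)" using p False by (simp add: degree_pCons_eq)
    show ?thesis
    proof (cases "a = 0")
      case True
      have "evp T p z = T (evp T r z)" using p True by (simp add: evp_pCons)
      then have "evp T r (T z) = 0" using less.prems(2) by (simp add: evp_T)
      moreover have "(T ^^ degree r) (T z) = (T ^^ degree p) z" using dp by (simp add: funpow_swap1)
      ultimately show ?thesis using less.hyps[of r "T z"] dp False less.prems(3) by simp
    next
      case False
      have "0 < degree p" using dp by simp
      then obtain c where c: "poly p c = 0" using alg_closed_imp_poly_has_root by blast
      then obtain s where s: "p = [:-c, 1:] * s" using poly_eq_0_iff_dvd by (metis dvdE)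
      have s0: "s \<noteq> 0" using s less.prems(1) by auto
      have dd0: "degree ([:-c, 1:] * s) = degree [:-c, 1:] + degree s"
        by (rule degree_mult_eq) (use s0 in auto)
      have dd: "degree ([:-c, 1:] * s) = Suc (degree s)"
        by (subst dd0) simp
      have ds: "degree p = Suc (degree s)" unfolding s by (rule dd)
      have "poly p 0 = a" using p by simp
      then have "poly p 0 \<noteq> 0" using False by simp
      then have c0: "c \<noteq> 0" using c by auto
      define w where "w = evp T s z"
      have "evp T p z = (- c) *\<^sub>C w + T w"
        unfolding s evp_mult w_def
        by (simp add: evp_pCons cblinear_zero[OF Tl] scaleC_one)
      then have Tw: "T w = c *\<^sub>C w" using less.prems(2)
        by (simp add: scaleC_minus_left add.commute eq_neg_iff_add_eq_0[symmetric])
      show ?thesis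
      proof (cases "w = 0")
        case False
        then show ?thesis using Tw c0 unfolding eigenvalue_def by blast
      next
        case True
        have "(T ^^ degree s) z \<noteq> 0"
        proof
          assume "(T ^^ degree s) z = 0"
          then have "(T ^^ degree p) z = 0" using ds by (simp add: cblinear_zero[OF Tl])
          then show False using less.prems(3) by simp
        qed
        then show ?thesis using less.hyps[of s z] ds s0 True w_def by simp
      qed
    qed
  qed
qed

end


context main_ctx
begin

lemma Tnl: "cblinear (T ^^ n)" by (rule cblinear_funpow[OF Tl])
lemma Tnlin: "linear (T ^^ n)" by (rule bounded_linear.linear[OF cblinear_bounded_linear[OF Tnl]])

definition Rg where "Rg n = range (T ^^ n)"
definition Mset where "Mset = (\<Inter>n. Rg n)"

lemma Rg_sub: "subspace (Rg n)"
  unfolding subspace_def Rg_def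
proof (intro conjI ballI allI)
  show "0 \<in> range (T ^^ n)" using funpow_zero[OF Tl, of n] by (metis rangeI)
  show "x + y \<in> range (T ^^ n)" if "x \<in> range (T ^^ n)" "y \<in> range (T ^^ n)" for x y
  proof -
    obtain a b where "x = (T ^^ n) a" "y = (T ^^ n) b" using \<open>x \<in> range (T ^^ n)\<close> \<open>y \<in> range (T ^^ n)\<close> by blast
    then have "x + y = (T ^^ n) (a + b)" by (simp add: cblinear_add[OF Tnl])
    then show ?thesis by blast
  qed
  show "c *\<^sub>R x \<in> range (T ^^ n)" if "x \<in> range (T ^^ n)" for c x
  proof -
    obtain a where "x = (T ^^ n) a" using \<open>x \<in> range (T ^^ n)\<close> by blast
    then have "c *\<^sub>R x = (T ^^ n) (c *\<^sub>R a)" by (simp add: cblinear_scaleR[OF Tnl])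
    then show ?thesis by blast
  qed
qed

lemma Rg_Suc: "Rg (Suc n) \<subseteq> Rg n"
proof
  fix y assume "y \<in> Rg (Suc n)"
  then obtain x where "y = (T ^^ Suc n) x" by (auto simp: Rg_def)
  then have "y = (T ^^ n) (T x)" by (simp add: funpow_swap1)
  then show "y \<in> Rg n" by (simp add: Rg_def)
qed

lemma Rg_mono: "n \<le> m \<Longrightarrow> Rg m \<subseteq> Rg n"
  using lift_Suc_antimono_le[of Rg, OF Rg_Suc] by blast

definition Bd where "Bd = (SOME B. finite B \<and> (\<forall>x. \<exists>w\<in>W. \<exists>f\<in>cspan B. x = w + f))"

lemma Bd: "finite Bd" "\<And>x. \<exists>w\<in>W. \<exists>f\<in>cspan Bd. x = w + f"
proof -
  have "\<exists>B. finite B \<and> (\<forall>x. \<exists>w\<in>W. \<exists>f\<in>cspan B. x = w + f)"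
    using decomp by metis
  then have "finite Bd \<and> (\<forall>x. \<exists>w\<in>W. \<exists>f\<in>cspan Bd. x = w + f)"
    unfolding Bd_def by (rule someI_ex)
  then show "finite Bd" "\<And>x. \<exists>w\<in>W. \<exists>f\<in>cspan Bd. x = w + f" by auto
qed

definition V0 where "V0 = Bd \<union> (\<lambda>b. \<i> *\<^sub>C b) ` Bd"
definition q where "q = card V0"

lemma V0_fin: "finite V0" using Bd(1) by (simp add: V0_def)

lemma dec_real: "\<exists>w\<in>W. \<exists>v\<in>span V0. x = w + v"
  using Bd(2)[of x] cspan_real_span[OF Bd(1)] unfolding V0_def by blast

lemma Rg_cov:
  assumes "y \<in> Rg n"
  shows "\<exists>a\<in>Wn n. \<exists>v\<in>span ((T ^^ n) ` V0). y = a + v"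
proof -
  obtain x where x: "y = (T ^^ n) x" using assms by (auto simp: Rg_def)
  obtain w v where wv: "w \<in> W" "v \<in> span V0" "x = w + v" using dec_real[of x] by blast
  have "y = (T ^^ n) w + (T ^^ n) v" using x wv by (simp add: cblinear_add[OF Tnl])
  moreover have "(T ^^ n) w \<in> Wn n" using wv by (simp add: Wn_def)
  moreover have "(T ^^ n) v \<in> span ((T ^^ n) ` V0)"
    using wv(2) span_linear_image[OF Tnlin[of n], of V0] by blast
  ultimately show ?thesis by blast
qed

lemma M_indep_bound:
  assumes U: "finite U" "independent U" "U \<subseteq> Mset"
  shows "card U \<le> q"
proof (rule ccontr)
  assume "\<not> card U \<le> q"
  then have cq: "q < card U" by simp
  define K where "K n = span U \<inter> Wn n" for n
  have Kne: "\<exists>z\<in>K n. z \<noteq> 0" for n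
  proof -
    have "card ((T ^^ n) ` V0) \<le> q" unfolding q_def by (rule card_image_le[OF V0_fin])
    then have c: "card ((T ^^ n) ` V0) < card U" using cq by simp
    have "\<exists>z\<in>span U. z \<noteq> 0 \<and> z \<in> Wn n"
    proof (rule L1[OF csubspace_subspace[OF Wn_csub] U(1,2) _ _ c])
      show "finite ((T ^^ n) ` V0)" using V0_fin by simp
      show "\<exists>y\<in>Wn n. \<exists>v\<in>span ((T ^^ n) ` V0). u = y + v" if "u \<in> U" for u
        using Rg_cov that U(3) by (auto simp: Mset_def)
    qed
    then show ?thesis by (auto simp: K_def)
  qed
  have Ksub: "subspace (K n)" for n
    unfolding K_def by (intro subspace_inter subspace_span csubspace_subspace[OF Wn_csub])
  have Kdec: "K (Suc n) \<subseteq> K n" for n using Wn_Suc by (auto simp: K_def)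
  obtain n0 where n0: "\<forall>n\<ge>n0. K n = K n0"
    using stab[of K U, OF Ksub Kdec U(1)] by (auto simp: K_def)
  obtain z where z: "z \<in> K n0" "z \<noteq> 0" using Kne by blast
  have "z \<in> Wn n" for n
  proof (cases "n \<le> n0")
    case True
    have "z \<in> Wn n0" using z(1) by (simp add: K_def)
    then show ?thesis by (rule subsetD[OF Wn_mono[OF True]])
  next
    case False
    then have "n0 \<le> n" by simp
    then have "K n = K n0" using n0 by blast
    then have "z \<in> K n" using z(1) by simp
    then show ?thesis by (simp add: K_def)
  qed
  then have "z \<in> Wu" by (simp add: Wu_def)
  then show False using Wu_zero z(2) by simp
qed

definition KerT where "KerT = {x. T x = 0}"

lemma KerT_sub: "subspace KerT"
  unfolding subspace_def KerT_def
  by (simp add: cblinear_add[OF Tl] cblinear_scaleR[OF Tl] cblinear_zero[OF Tl])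

lemma Ker_indep_bound:
  assumes U: "finite U" "independent U" "U \<subseteq> KerT"
  shows "card U \<le> q"
proof (rule ccontr)
  assume "\<not> card U \<le> q"
  then have c: "card V0 < card U" by (simp add: q_def)
  have "\<exists>z\<in>span U. z \<noteq> 0 \<and> z \<in> W"
    by (rule L1[OF csubspace_subspace[OF W_csub] U(1,2) V0_fin dec_real c])
  then obtain z where z: "z \<in> span U" "z \<noteq> 0" "z \<in> W" by blast
  have "span U \<subseteq> KerT" using U(3) KerT_sub by (rule span_minimal)
  then have "T z = T 0" using z(1) by (auto simp: KerT_def cblinear_zero[OF Tl])
  then have "z = 0" using W_inj[OF z(3) csubspace_0[OF W_csub]] by simp
  then show False using z(2) by simp
qed

lemma fin_span_of_bound:
  assumes "\<And>U. finite U \<Longrightarrow> independent U \<Longrightarrow> U \<subseteq> X \<Longrightarrow> card U \<le> q"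
  shows "\<exists>A. finite A \<and> A \<subseteq> X \<and> X \<subseteq> span A"
proof -
  obtain B where B: "B \<subseteq> X" "independent B" "X \<subseteq> span B"
    using maximal_independent_subset[of X] by blast
  have "finite B"
  proof (rule ccontr)
    assume "infinite B"
    then obtain U where U: "finite U" "card U = Suc q" "U \<subseteq> B"
      using infinite_arbitrarily_large by blast
    have "independent U" using independent_mono[OF B(2) U(3)] .
    then have "card U \<le> q" using assms[OF U(1)] U(3) B(1) by blast
    then show False using U(2) by simp
  qed
  then show ?thesis using B by blast
qed

lemma M_surj:
  assumes y: "y \<in> Mset"
  shows "\<exists>z\<in>Mset. T z = y"
proof -
  obtain AK where AK: "finite AK" "KerT \<subseteq> span AK"
    using fin_span_of_bound[OF Ker_indep_bound] by blast
  define KK where "KK m = KerT \<inter> Rg m" for m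
  have KKsub: "subspace (KK m)" for m unfolding KK_def by (intro subspace_inter KerT_sub Rg_sub)
  have KKdec: "KK (Suc m) \<subseteq> KK m" for m using Rg_Suc by (auto simp: KK_def)
  obtain m0 where m0: "\<forall>m\<ge>m0. KK m = KK m0"
    using stab[of KK AK, OF KKsub KKdec AK(1)] AK(2) by (auto simp: KK_def)
  have pre: "\<exists>z\<in>Rg m. T z = y" for m
  proof -
    have "y \<in> Rg (Suc m)" using y by (auto simp: Mset_def)
    then obtain x where "y = (T ^^ Suc m) x" by (auto simp: Rg_def)
    then have "y = T ((T ^^ m) x)" by simp
    then show ?thesis by (auto simp: Rg_def)
  qed
  obtain z0 where z0: "z0 \<in> Rg m0" "T z0 = y" using pre by blast
  have "z0 \<in> Rg m" for m
  proof (cases "m \<le> m0")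
    case True then show ?thesis using Rg_mono z0 by blast
  next
    case False
    then have mm: "m0 \<le> m" by simp
    obtain zm where zm: "zm \<in> Rg m" "T zm = y" using pre by blast
    have zm0: "zm \<in> Rg m0" using zm(1) Rg_mono[OF mm] by blast
    define d where "d = zm - z0"
    have "d \<in> KerT" using zm(2) z0(2) by (simp add: d_def KerT_def cblinear_diff[OF Tl])
    moreover have "d \<in> Rg m0" unfolding d_def by (rule subspace_diff[OF Rg_sub zm0 z0(1)])
    ultimately have "d \<in> KK m0" by (simp add: KK_def)
    moreover have "KK m = KK m0" using m0 mm by blast
    ultimately have "d \<in> KK m" by simp
    then have "d \<in> Rg m" by (simp add: KK_def)
    then have "zm - d \<in> Rg m" by (rule subspace_diff[OF Rg_sub zm(1)])
    then show ?thesis by (simp add: d_def)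
  qed
  then have "z0 \<in> Mset" by (simp add: Mset_def)
  then show ?thesis using z0 by blast
qed

lemma M_surjn: "y \<in> Mset \<Longrightarrow> \<exists>z\<in>Mset. (T ^^ k) z = y"
proof (induction k arbitrary: y)
  case 0 then show ?case by auto
next
  case (Suc k)
  obtain z' where z': "z' \<in> Mset" "(T ^^ k) z' = y" using Suc by blast
  obtain z where z: "z \<in> Mset" "T z = z'" using M_surj[OF z'(1)] by blast
  have "(T ^^ Suc k) z = (T ^^ k) (T z)" by (simp add: funpow_swap1)
  then have "(T ^^ Suc k) z = y" using z z' by simp
  then show ?case using z by blast
qed

lemma M_inv: "z \<in> Mset \<Longrightarrow> T z \<in> Mset"
proof -
  assume z: "z \<in> Mset"
  have "T z \<in> Rg n" for n
  proof -
    obtain x where "z = (T ^^ n) x" using z by (auto simp: Mset_def Rg_def)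
    then have "T z = (T ^^ n) (T x)" by (simp add: funpow_swap1)
    then show ?thesis by (simp add: Rg_def)
  qed
  then show ?thesis by (simp add: Mset_def)
qed

lemma M_invn: "z \<in> Mset \<Longrightarrow> (T ^^ i) z \<in> Mset"
  by (induction i) (auto intro: M_inv)

lemma M_zero:
  assumes noeig: "\<And>c. c \<noteq> 0 \<Longrightarrow> \<not> eigenvalue T c"
  shows "Mset = {0}"
proof (rule ccontr)
  assume "Mset \<noteq> {0}"
  moreover have "0 \<in> Mset" using subspace_0[OF Rg_sub] by (auto simp: Mset_def)
  ultimately obtain x where x: "x \<in> Mset" "x \<noteq> 0" by blast
  obtain A0 where A0: "finite A0" "A0 \<subseteq> Mset" "Mset \<subseteq> span A0"
    using fin_span_of_bound[OF M_indep_bound] by blast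
  define Q where "Q = card A0"
  obtain y where y: "y \<in> Mset" "(T ^^ Suc Q) y = x" using M_surjn[OF x(1)] by blast
  define f where "f i = (T ^^ i) y" for i
  have fA: "f i \<in> span A0" for i using M_invn[OF y(1)] A0(3) by (auto simp: f_def)
  have "\<exists>p. p \<noteq> 0 \<and> degree p \<le> Q \<and> evp T p y = 0"
  proof (cases "inj_on f {..Q}")
    case False
    then obtain i j where ij: "i \<le> Q" "j \<le> Q" "i \<noteq> j" "f i = f j" by (auto simp: inj_on_def)
    define p where "p = monom (1::complex) i - monom 1 j"
    have "coeff p i = 1" using ij(3) by (simp add: p_def)
    then have "p \<noteq> 0" by auto
    moreover have "degree p \<le> Q"
      using degree_diff_le_max[of "monom (1::complex) i" "monom 1 j"] degree_monom_le[of "1::complex" i]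
        degree_monom_le[of "1::complex" j] ij by (simp add: p_def)
    moreover have "evp T p y = 0"
      using ij(4) by (simp add: p_def evp_diff[OF Tl] evp_monom[OF Tl] f_def scaleC_one)
    ultimately show ?thesis by blast
  next
    case True
    define S where "S = f ` {..Q}"
    have fS: "finite S" by (simp add: S_def)
    have cS: "card S = Suc Q" using True by (simp add: S_def card_image)
    have "S \<subseteq> span A0" using fA by (auto simp: S_def)
    then have "dependent S" using independent_span_bound[OF A0(1), of S] cS by (auto simp: Q_def)
    then obtain u where u: "\<exists>v\<in>S. u v \<noteq> 0" "(\<Sum>v\<in>S. u v *\<^sub>R v) = 0"
      using dependent_finite[OF fS] by blast
    define p where "p = (\<Sum>i\<le>Q. monom (complex_of_real (u (f i))) i)"
    have cp: "coeff p i = (if i \<le> Q then complex_of_real (u (f i)) else 0)" for i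
      by (simp add: p_def coeff_sum)
    obtain v where v: "v \<in> S" "u v \<noteq> 0" using u(1) by blast
    then obtain i where i: "i \<le> Q" "v = f i" by (auto simp: S_def)
    have "coeff p i \<noteq> 0" using cp i v by simp
    then have "p \<noteq> 0" by auto
    moreover have "degree p \<le> Q"
      unfolding p_def by (rule degree_sum_le) (auto intro: order_trans[OF degree_monom_le])
    moreover have "evp T p y = 0"
    proof -
      have "evp T p y = (\<Sum>i\<le>Q. complex_of_real (u (f i)) *\<^sub>C f i)"
        by (simp add: p_def evp_sum[OF Tl] evp_monom[OF Tl] f_def)
      also have "\<dots> = (\<Sum>i\<le>Q. u (f i) *\<^sub>R f i)" by (simp add: scaleC_of_real)
      also have "\<dots> = (\<Sum>v\<in>S. u v *\<^sub>R v)" unfolding S_def using True by (simp add: sum.reindex)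
      finally show ?thesis using u(2) by simp
    qed
    ultimately show ?thesis by blast
  qed
  then obtain p where p: "p \<noteq> 0" "degree p \<le> Q" "evp T p y = 0" by blast
  have "(T ^^ degree p) y \<noteq> 0"
  proof
    assume a: "(T ^^ degree p) y = 0"
    have "Suc Q = (Suc Q - degree p) + degree p" using p(2) by simp
    then have "(T ^^ Suc Q) y = (T ^^ (Suc Q - degree p)) ((T ^^ degree p) y)"
      by (metis funpow_add o_apply)
    then have "x = 0" using a y(2) funpow_zero[OF Tl] by simp
    then show False using x(2) by simp
  qed
  then obtain c where "c \<noteq> 0" "eigenvalue T c" using eig[OF Tl p(1) p(3)] by blast
  then show False using noeig by blast
qed

lemma M_analytic: "Mset = {0} \<Longrightarrow> analytic_op T"
proof -
  assume M: "Mset = {0}"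
  have "(\<Inter>m\<in>{1..}. range (T ^^ m)) = Mset"
  proof
    show "Mset \<subseteq> (\<Inter>m\<in>{1..}. range (T ^^ m))" by (auto simp: Mset_def Rg_def)
    show "(\<Inter>m\<in>{1..}. range (T ^^ m)) \<subseteq> Mset"
    proof
      fix x assume x: "x \<in> (\<Inter>m\<in>{1..}. range (T ^^ m))"
      have "x \<in> Rg n" for n
      proof (cases "n = 0")
        case True then show ?thesis by (simp add: Rg_def)
      next
        case False then show ?thesis using x by (auto simp: Rg_def)
      qed
      then show "x \<in> Mset" by (simp add: Mset_def)
    qed
  qed
  then show ?thesis using M by (simp add: analytic_op_def)
qed

end

lemma analytic_no_eig:
  assumes Tl: "cblinear T" and an: "analytic_op T" and c: "c \<noteq> 0"
  shows "\<not> eigenvalue T c"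
proof
  assume "eigenvalue T c"
  then obtain x where x: "x \<noteq> 0" "T x = c *\<^sub>C x" by (auto simp: eigenvalue_def)
  have pw: "(T ^^ m) x = (c ^ m) *\<^sub>C x" for m
    by (induction m) (simp_all add: scaleC_one cblinear_scaleC[OF Tl] x(2) scaleC_scaleC mult.commute)
  have "x \<in> range (T ^^ m)" for m
  proof -
    have "(T ^^ m) ((inverse c ^ m) *\<^sub>C x) = (inverse c ^ m) *\<^sub>C ((T ^^ m) x)"
      by (simp add: cblinear_scaleC[OF cblinear_funpow[OF Tl]])
    also have "\<dots> = x" using c by (simp add: pw scaleC_scaleC power_mult_distrib[symmetric] scaleC_one)
    finally show ?thesis by (metis rangeI)
  qed
  then have xin: "x \<in> (\<Inter>m\<in>{1..}. range (T ^^ m))" by blast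
  have eq: "(\<Inter>m\<in>{1..}. range (T ^^ m)) = {0}" using an by (simp only: analytic_op_def)
  have "x \<in> {0}" using xin unfolding eq .
  then show False using x(1) by simp
qed

theorem corollary4p4:
  fixes T :: "'a::chilbert \<Rightarrow> 'a"
  assumes "separable_space TYPE('a)"
    and "\<not> finite_dim_set (UNIV :: 'a set)"
    and "contraction_op T"
    and "completely_non_unitary T"
    and "\<not> isometry_op T"
    and "defect_space T \<subseteq> defect_space (adj T)"
    and "finite_dim_set (defect_space (adj T))"
  shows "analytic_op T \<longleftrightarrow> \<not> (\<exists>z. z \<noteq> 0 \<and> eigenvalue T z)"
proof -
  interpret main_ctx T using assms(3,4,6,7) by unfold_locales
  show ?thesis
  proof
    assume "analytic_op T"
    then show "\<not> (\<exists>z. z \<noteq> 0 \<and> eigenvalue T z)" using analytic_no_eig[OF Tl] by blast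
  next
    assume "\<not> (\<exists>z. z \<noteq> 0 \<and> eigenvalue T z)"
    then have "Mset = {0}" by (intro M_zero) blast
    then show "analytic_op T" by (rule M_analytic)
  qed
qed


end
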